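(* Let $\omega>0$, $S^1=[0,2\pi/\omega]$ with endpoints identified, and let $c$ be a smooth real $2\pi/\omega$-periodic function of the form $c(t)=2\sum_{n\ge1}\left(\frac{E_n}{(in\omega)^2}e^{in\omega t}+\frac{\overline{E_n}}{(-in\omega)^2}e^{-in\omega t}\right)$. For $\operatorname{Im}\sigma\ge0$ define $K_L(\sigma):L^2(S^1,dt)\to L^2(S^1,dt)$ by $$K_L(\sigma)f(t)=\sqrt{\tfrac{i}{\pi}}\int_0^{\infty}\left[\exp\!\left(i\frac{(c(t)-c(t-s))^2}{4s}\right)-1\right]e^{i\sigma s}f(t-s)\frac{ds}{\sqrt{s}} .$$ Then $K_L(\sigma)$ is compact for $\operatorname{Im}\sigma\ge0$, analytic in $\sigma$ for $\operatorname{Im}\sigma>0$, and has continuous limiting values at $\operatorname{Im}\sigma=0$.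
   Context: Functions on $S^1$ are extended periodically to $\mathbb{R}$ in the formula. *)

theory Defs
  imports "HOL-Analysis.Analysis"
begin

text \<open>L^2(S^1) with S^1 = [0,T], endpoints identified: functions on the reals that are
  T-periodic, Borel measurable and square integrable over one period.\<close>
definition L2S1 :: "real \<Rightarrow> (real \<Rightarrow> complex) set" where
  "L2S1 T = {f. (\<forall>t. f (t + T) = f t) \<and> f \<in> borel_measurable lborel \<and>
                set_integrable lborel {0..T} (\<lambda>t. (cmod (f t))^2)}"

definition L2norm :: "real \<Rightarrow> (real \<Rightarrow> complex) \<Rightarrow> real" where
  "L2norm T f = sqrt (LINT t:{0..T}|lborel. (cmod (f t))^2)"

definition KL :: "(real \<Rightarrow> real) \<Rightarrow> complex \<Rightarrow> (real \<Rightarrow> complex) \<Rightarrow> real \<Rightarrow> complex" where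
  "KL c \<sigma> f t = csqrt (\<i> / of_real pi) *
     (LINT s:{0<..}|lborel.
        (exp (\<i> * of_real ((c t - c (t - s))^2 / (4 * s))) - 1)
        * exp (\<i> * \<sigma> * of_real s) * f (t - s) / of_real (sqrt s))"

text \<open>Compact operator on L^2(S^1): linear map of L^2 into itself sending bounded
  sequences to sequences with an L^2-Cauchy (hence, by completeness, convergent) subsequence.\<close>
definition compact_op_L2 :: "real \<Rightarrow> ((real \<Rightarrow> complex) \<Rightarrow> real \<Rightarrow> complex) \<Rightarrow> bool" where
  "compact_op_L2 T A \<longleftrightarrow>
     (\<forall>f\<in>L2S1 T. A f \<in> L2S1 T) \<and>
     (\<forall>f\<in>L2S1 T. \<forall>g\<in>L2S1 T. \<forall>a::complex.
        L2norm T (\<lambda>t. A (\<lambda>x. a * f x + g x) t - (a * A f t + A g t)) = 0) \<and>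
     (\<forall>F.  (\<forall>n. F n \<in> L2S1 T) \<longrightarrow> (\<exists>B. \<forall>n. L2norm T (F n) \<le> B) \<longrightarrow>
        (\<exists>r::nat\<Rightarrow>nat. strict_mono r \<and>
           (\<forall>e>0. \<exists>N. \<forall>m\<ge>N. \<forall>n\<ge>N. L2norm T (\<lambda>t. A (F (r m)) t - A (F (r n)) t) < e)))"

text \<open>Operator-norm complex differentiability (= analyticity) of an operator family on U.\<close>
definition op_holomorphic_on ::
  "real \<Rightarrow> (complex \<Rightarrow> (real \<Rightarrow> complex) \<Rightarrow> real \<Rightarrow> complex) \<Rightarrow> complex set \<Rightarrow> bool" where
  "op_holomorphic_on T K U \<longleftrightarrow>
     (\<forall>\<sigma>\<in>U. \<exists>D. (\<forall>f\<in>L2S1 T. D f \<in> L2S1 T) \<and>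
        (\<exists>C. \<forall>f\<in>L2S1 T. L2norm T (D f) \<le> C * L2norm T f) \<and>
        (\<forall>e>0. \<exists>d>0. \<forall>h. h \<noteq> 0 \<and> cmod h < d \<longrightarrow>
           (\<forall>f\<in>L2S1 T. L2norm T (\<lambda>t. (K (\<sigma> + h) f t - K \<sigma> f t) / h - D f t) \<le> e * L2norm T f)))"

definition op_continuous_on ::
  "real \<Rightarrow> (complex \<Rightarrow> (real \<Rightarrow> complex) \<Rightarrow> real \<Rightarrow> complex) \<Rightarrow> complex set \<Rightarrow> bool" where
  "op_continuous_on T K S \<longleftrightarrow>
     (\<forall>\<sigma>0\<in>S. \<forall>e>0. \<exists>d>0. \<forall>\<sigma>\<in>S. cmod (\<sigma> - \<sigma>0) < d \<longrightarrow>
        (\<forall>f\<in>L2S1 T. L2norm T (\<lambda>t. K \<sigma> f t - K \<sigma>0 f t) \<le> e * L2norm T f))"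

end

theory Submission
  imports Defs "HOL-Complex_Analysis.Great_Picard"
begin


lemma per_nat:
  assumes "\<forall>t. f (t + T) = f t"
  shows "f (x + real n * T) = f x"
proof (induction n arbitrary: x)
  case 0 then show ?case by simp
next
  case (Suc n)
  have "f (x + real (Suc n) * T) = f ((x + real n * T) + T)" by (simp add: algebra_simps)
  also have "\<dots> = f (x + real n * T)" using assms by simp
  finally show ?case using Suc by simp
qed

lemma per_int:
  assumes "\<forall>t. f (t + T) = f t"
  shows "f (x + real_of_int k * T) = f x"
proof (cases "k \<ge> 0")
  case True
  then obtain n where "k = int n" using nonneg_int_cases by blast
  then show ?thesis using per_nat[OF assms] by simp
next
  case False
  define n where "n = nat (-k)"
  have n: "k = - int n" using False unfolding n_def by simp
  have "f x = f ((x + real_of_int k * T) + real n * T)" using n by simp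
  also have "\<dots> = f (x + real_of_int k * T)" using per_nat[OF assms] by blast
  finally show ?thesis by simp
qed

lemma L2S1_D:
  assumes "f \<in> L2S1 T"
  shows "\<forall>t. f (t + T) = f t" "f \<in> borel_measurable borel"
    "set_integrable lborel {0..T} (\<lambda>t. (cmod (f t))^2)" "f \<in> borel_measurable lborel"
  using assms unfolding L2S1_def by (auto simp: measurable_lborel1)

lemma L2norm_sq:
  assumes "f \<in> L2S1 T"
  shows "(L2norm T f)^2 = (LINT t:{0..T}|lborel. (cmod (f t))^2)"
proof -
  have "0 \<le> (LINT t:{0..T}|lborel. (cmod (f t))^2)"
    unfolding set_lebesgue_integral_def by (rule integral_nonneg_AE) (auto split: split_indicator)
  then show ?thesis unfolding L2norm_def by simp
qed

lemma L2norm_nonneg: "L2norm T f \<ge> 0"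
proof -
  have "0 \<le> (LINT t:{0..T}|lborel. (cmod (f t))^2)"
    unfolding set_lebesgue_integral_def by (rule integral_nonneg_AE) (auto split: split_indicator)
  then show ?thesis unfolding L2norm_def by simp
qed

lemma nn_period:
  assumes "f \<in> L2S1 T"
  shows "(\<integral>\<^sup>+x. ennreal ((cmod (f x))^2) * indicator {0..T} x \<partial>lborel) = ennreal ((L2norm T f)^2)"
proof -
  note D = L2S1_D[OF assms]
  have "(\<integral>\<^sup>+x. ennreal ((cmod (f x))^2) * indicator {0..T} x \<partial>lborel)
      = (\<integral>\<^sup>+x. ennreal (indicator {0..T} x *\<^sub>R (cmod (f x))^2) \<partial>lborel)"
    by (intro nn_integral_cong) (auto split: split_indicator)
  also have "\<dots> = ennreal (LINT t:{0..T}|lborel. (cmod (f t))^2)"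
    unfolding set_lebesgue_integral_def
    using D(3) unfolding set_integrable_def
    by (intro nn_integral_eq_integral) auto
  finally show ?thesis using L2norm_sq[OF assms] by simp
qed

lemma nn_period_shift:
  assumes "f \<in> L2S1 T"
  shows "(\<integral>\<^sup>+x. ennreal ((cmod (f x))^2) * indicator {real_of_int k * T..real_of_int k * T + T} x \<partial>lborel)
     = ennreal ((L2norm T f)^2)"
proof -
  note D = L2S1_D[OF assms]
  have m: "(\<lambda>x. ennreal ((cmod (f x))^2) * indicator {real_of_int k * T..real_of_int k * T + T} x) \<in> borel_measurable borel"
    using D(2) by measurable
  have "(\<integral>\<^sup>+x. ennreal ((cmod (f x))^2) * indicator {real_of_int k * T..real_of_int k * T + T} x \<partial>lborel)
    = ennreal \<bar>1\<bar> * (\<integral>\<^sup>+x. ennreal ((cmod (f (real_of_int k * T + 1 * x)))^2) * indicator {real_of_int k * T..real_of_int k * T + T} (real_of_int k * T + 1 * x) \<partial>lborel)"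
    by (rule nn_integral_real_affine[OF m]) simp
  also have "\<dots> = (\<integral>\<^sup>+x. ennreal ((cmod (f x))^2) * indicator {0..T} x \<partial>lborel)"
  proof -
    have e: "f (real_of_int k * T + x) = f x" for x
      using per_int[OF D(1), of x k] by (simp add: add.commute)
    show ?thesis by (simp add: e indicator_def)
  qed
  finally show ?thesis using nn_period[OF assms] by simp
qed

lemma ind_split:
  assumes "b \<le> a" "a < b + T" "(T::real) > 0"
  shows "(g::ennreal) * indicator {a..a+T} x \<le> g * indicator {b..b + T} x + g * indicator {(b+T)..(b+T) + T} x"
proof (cases "x \<in> {a..a+T}")
  case True
  then have "x \<in> {b..b + T} \<or> x \<in> {(b+T)..(b+T) + T}" using assms by auto
  then show ?thesis using True by (auto split: split_indicator)
qed (auto split: split_indicator)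

lemma nn_interval_sq:
  assumes "f \<in> L2S1 T" "T > 0"
  shows "(\<integral>\<^sup>+x. ennreal ((cmod (f x))^2) * indicator {a..a+T} x \<partial>lborel) \<le> 2 * ennreal ((L2norm T f)^2)"
proof -
  note D = L2S1_D[OF assms(1)]
  define n where "n = floor (a / T)"
  have "real_of_int n \<le> a/T" "a/T < real_of_int n + 1" using n_def by linarith+
  then have n1: "real_of_int n * T \<le> a" and n2: "a < real_of_int n * T + T"
    using assms(2) by (simp_all add: le_divide_eq divide_less_eq algebra_simps)
  have ind: "g * indicator {a..a+T} x \<le> g * indicator {real_of_int n * T..real_of_int n * T + T} x
       + g * indicator {real_of_int (n+1) * T..real_of_int (n+1) * T + T} x" for x and g :: ennreal
    using ind_split[OF n1 n2 assms(2), of g x] by (simp add: algebra_simps)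
  have "(\<integral>\<^sup>+x. ennreal ((cmod (f x))^2) * indicator {a..a+T} x \<partial>lborel)
     \<le> (\<integral>\<^sup>+x. ennreal ((cmod (f x))^2) * indicator {real_of_int n * T..real_of_int n * T + T} x
        + ennreal ((cmod (f x))^2) * indicator {real_of_int (n+1) * T..real_of_int (n+1) * T + T} x \<partial>lborel)"
    by (intro nn_integral_mono ind)
  also have "\<dots> = (\<integral>\<^sup>+x. ennreal ((cmod (f x))^2) * indicator {real_of_int n * T..real_of_int n * T + T} x \<partial>lborel)
        + (\<integral>\<^sup>+x. ennreal ((cmod (f x))^2) * indicator {real_of_int (n+1) * T..real_of_int (n+1) * T + T} x \<partial>lborel)"
    using D(4) by (intro nn_integral_add; measurable; auto)
  also have "\<dots> = ennreal ((L2norm T f)^2) + ennreal ((L2norm T f)^2)"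
    by (simp only: nn_period_shift[OF assms(1)])
  also have "\<dots> = 2 * ennreal ((L2norm T f)^2)"
    by (simp add: mult_2)
  finally show ?thesis .
qed

lemma nn_interval_abs:
  assumes "f \<in> L2S1 T" "T > 0"
  shows "(\<integral>\<^sup>+x. ennreal (cmod (f x)) * indicator {a..a+T} x \<partial>lborel) \<le> ennreal (sqrt (2*T) * L2norm T f)"
proof -
  note D = L2S1_D[OF assms(1)]
  define X where "X = (\<integral>\<^sup>+x. ennreal (cmod (f x)) * indicator {a..a+T} x \<partial>lborel)"
  have "X^2 = (\<integral>\<^sup>+x. (ennreal (cmod (f x)) * indicator {a..a+T} x) * indicator {a..a+T} x \<partial>lborel)^2"
    unfolding X_def by (intro arg_cong[where f="\<lambda>x. x^2"] nn_integral_cong) (auto split: split_indicator)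
  also have "\<dots> \<le> (\<integral>\<^sup>+x. (ennreal (cmod (f x)) * indicator {a..a+T} x)^2 \<partial>lborel) * (\<integral>\<^sup>+x. (indicator {a..a+T} x)^2 \<partial>lborel)"
    using D(4) by (intro Cauchy_Schwarz_nn_integral; measurable; auto)
  also have "(\<integral>\<^sup>+x. (ennreal (cmod (f x)) * indicator {a..a+T} x)^2 \<partial>lborel)
       = (\<integral>\<^sup>+x. ennreal ((cmod (f x))^2) * indicator {a..a+T} x \<partial>lborel)"
    by (intro nn_integral_cong) (auto split: split_indicator simp: ennreal_power)
  also have "(\<integral>\<^sup>+x. (indicator {a..a+T} x)^2 \<partial>lborel) = (\<integral>\<^sup>+x. indicator {a..a+T} x \<partial>lborel)"
    by (intro nn_integral_cong) (auto split: split_indicator)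
  also have "\<dots> = ennreal T" using assms(2) by simp
  finally have "X^2 \<le> (\<integral>\<^sup>+x. ennreal ((cmod (f x))^2) * indicator {a..a+T} x \<partial>lborel) * ennreal T" .
  also have "\<dots> \<le> 2 * ennreal ((L2norm T f)^2) * ennreal T"
    by (intro mult_right_mono nn_interval_sq[OF assms]) auto
  also have "\<dots> = ennreal (2 * (L2norm T f)^2 * T)"
    using assms(2) by (simp add: ennreal_mult)
  also have "2 * (L2norm T f)^2 * T = (sqrt (2*T) * L2norm T f)^2"
    using assms(2) by (simp add: power_mult_distrib)
  finally have sq: "X^2 \<le> ennreal ((sqrt (2*T) * L2norm T f)^2)" .
  have nn: "0 \<le> sqrt (2*T) * L2norm T f" using L2norm_nonneg[of T f] assms(2) by simp
  show ?thesis
  proof (cases X)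
    case (real r)
    then have "ennreal (r^2) \<le> ennreal ((sqrt (2*T) * L2norm T f)^2)" using sq by (simp add: ennreal_power)
    then have "r^2 \<le> (sqrt (2*T) * L2norm T f)^2" using nn by (subst (asm) ennreal_le_iff) auto
    then have "r \<le> sqrt (2*T) * L2norm T f" using nn real(2) by (meson power2_le_imp_le)
    then show ?thesis using real X_def by (simp add: ennreal_leI)
  next
    case top
    then show ?thesis using sq by (simp add: X_def top_unique)
  qed
qed



definition wt :: "real \<Rightarrow> real \<Rightarrow> real" where
  "wt p u = (1 + \<bar>u\<bar>) powr (-p)"

definition Mc :: "real \<Rightarrow> real \<Rightarrow> real" where
  "Mc p T = 2 * sqrt (2*T) * (\<Sum>m. (1 + real m * T) powr (-p))"

lemma wt_nonneg: "0 \<le> wt p u" unfolding wt_def by simp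

lemma wt_pos: "0 < wt p u" unfolding wt_def by simp

lemma summable_grid:
  assumes "T > 0" "p > 1"
  shows "summable (\<lambda>m. (1 + real m * T) powr (-p))"
proof -
  define k where "k = min 1 T"
  have k: "0 < k" "k \<le> 1" "k \<le> T" using assms unfolding k_def by auto
  have s1: "summable (\<lambda>m. real m powr (-p))" using assms(2) by (simp add: summable_real_powr_iff)
  then have s2: "summable (\<lambda>m. real (Suc m) powr (-p))" by (subst summable_Suc_iff)
  then have s3: "summable (\<lambda>m. k powr (-p) * real (Suc m) powr (-p))" by (rule summable_mult)
  show ?thesis
  proof (rule summable_comparison_test'[OF s3])
    fix m :: nat
    have le: "k * real (Suc m) \<le> 1 + real m * T"
      using k by (simp add: algebra_simps) (metis add_mono mult.commute mult_right_mono of_nat_0_le_iff)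
    have "norm ((1 + real m * T) powr (-p)) = (1 + real m * T) powr (-p)"
      using assms by simp
    also have "\<dots> \<le> (k * real (Suc m)) powr (-p)"
      using le k assms by (intro powr_mono2') auto
    also have "\<dots> = k powr (-p) * real (Suc m) powr (-p)"
      using k by (simp add: powr_mult)
    finally show "norm ((1 + real m * T) powr (-p)) \<le> k powr (-p) * real (Suc m) powr (-p)" .
  qed
qed

lemma Mc_nonneg:
  assumes "T > 0" "p > 1"
  shows "0 \<le> Mc p T"
  unfolding Mc_def using summable_grid[OF assms] assms
  by (intro mult_nonneg_nonneg suminf_nonneg) auto

lemma refl_interval:
  assumes "f \<in> L2S1 T" "T > 0"
  shows "(\<integral>\<^sup>+u. ennreal (cmod (f (t - u))) * indicator {b..b+T} u \<partial>lborel) \<le> ennreal (sqrt (2*T) * L2norm T f)"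
proof -
  note D = L2S1_D[OF assms(1)]
  define F where "F x = ennreal (cmod (f x)) * indicator {t-b-T..(t-b-T)+T} x" for x
  have m: "F \<in> borel_measurable borel" unfolding F_def using D(2) by measurable
  have "(\<integral>\<^sup>+x. F x \<partial>lborel) = ennreal \<bar>-1\<bar> * (\<integral>\<^sup>+u. F (t + (-1) * u) \<partial>lborel)"
    by (rule nn_integral_real_affine[OF m]) simp
  also have "\<dots> = (\<integral>\<^sup>+u. ennreal (cmod (f (t - u))) * indicator {b..b+T} u \<partial>lborel)"
  proof -
    have ie: "indicator {t-b-T..t-b} (t - u) = (indicator {b..b+T} u :: ennreal)" for u
      by (auto simp: indicator_def)
    show ?thesis unfolding F_def by (simp add: ie)
  qed
  finally have e: "(\<integral>\<^sup>+u. ennreal (cmod (f (t - u))) * indicator {b..b+T} u \<partial>lborel) = (\<integral>\<^sup>+x. F x \<partial>lborel)" by simp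
  show ?thesis unfolding e F_def by (rule nn_interval_abs[OF assms])
qed

lemma lb: "g \<in> borel_measurable borel \<Longrightarrow> g \<in> borel_measurable lborel"
  by (simp add: measurable_cong_sets[OF sets_lborel refl])

lemma shift_meas: "f \<in> borel_measurable borel \<Longrightarrow> (\<lambda>x. f ((t::real) - x)) \<in> borel_measurable borel"
proof -
  have "continuous_on UNIV (\<lambda>x::real. t - x)" by (intro continuous_intros)
  then have "(\<lambda>x::real. t - x) \<in> borel_measurable borel" by (rule borel_measurable_continuous_onI)
  then show "f \<in> borel_measurable borel \<Longrightarrow> (\<lambda>x. f (t - x)) \<in> borel_measurable borel"
    by (rule measurable_compose)
qed

lemma ennreal_le_suminf: "(f::nat \<Rightarrow> ennreal) i \<le> suminf f"
proof -
  have "sum f {i} \<le> suminf f" by (rule sum_le_suminf) auto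
  then show ?thesis by simp
qed

lemma K1:
  assumes "f \<in> L2S1 T" "T > 0" "p > 1"
  shows "(\<integral>\<^sup>+u. ennreal (wt p u * cmod (f (t - u))) \<partial>lborel) \<le> ennreal (Mc p T * L2norm T f)"
proof -
  note D = L2S1_D[OF assms(1)]
  define a where "a m = (1 + real m * T) powr (-p)" for m :: nat
  define G where "G m u = ennreal (a m) * (ennreal (cmod (f (t - u))) * indicator {real m * T..real m * T + T} u
      + ennreal (cmod (f (t - u))) * indicator {-(real m * T) - T..(-(real m * T) - T) + T} u)" for m u
  have pt: "ennreal (wt p u * cmod (f (t - u))) \<le> (\<Sum>m. G m u)" for u
  proof -
    define m where "m = nat (floor (\<bar>u\<bar> / T))"
    have "real_of_int (floor (\<bar>u\<bar> / T)) \<le> \<bar>u\<bar>/T" "\<bar>u\<bar>/T < real_of_int (floor (\<bar>u\<bar> / T)) + 1" by linarith+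
    moreover have "0 \<le> floor (\<bar>u\<bar> / T)" using assms(2) by simp
    ultimately have "real m \<le> \<bar>u\<bar>/T" "\<bar>u\<bar>/T < real m + 1" unfolding m_def by auto
    then have m1: "real m * T \<le> \<bar>u\<bar>" and m2: "\<bar>u\<bar> < real m * T + T"
      using assms(2) by (simp_all add: le_divide_eq divide_less_eq algebra_simps)
    have "0 < 1 + real m * T" using assms(2) by (simp add: add_pos_nonneg)
    then have "wt p u \<le> a m" unfolding wt_def a_def
      using m1 assms by (intro powr_mono2') auto
    then have "wt p u * cmod (f (t - u)) \<le> a m * cmod (f (t - u))"
      by (rule mult_right_mono) simp
    then have "ennreal (wt p u * cmod (f (t - u))) \<le> ennreal (a m * cmod (f (t - u)))"
      by (rule ennreal_leI)
    also have "\<dots> = ennreal (a m) * ennreal (cmod (f (t - u)))"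
      unfolding a_def by (simp add: ennreal_mult)
    also have "\<dots> \<le> G m u"
    proof (cases "u \<ge> 0")
      case True
      then have "u \<in> {real m * T..real m * T + T}" using m1 m2 by auto
      then show ?thesis unfolding G_def by (intro mult_left_mono) (auto simp: indicator_def)
    next
      case False
      then have "u \<in> {-(real m * T) - T..(-(real m * T) - T) + T}" using m1 m2 by auto
      then show ?thesis unfolding G_def by (intro mult_left_mono) (auto simp: indicator_def)
    qed
    also have "\<dots> \<le> (\<Sum>m. G m u)" by (rule ennreal_le_suminf)
    finally show ?thesis .
  qed
  have mG: "G m \<in> borel_measurable lborel" for m
    unfolding G_def using D(2) by measurable
  have "(\<integral>\<^sup>+u. ennreal (wt p u * cmod (f (t - u))) \<partial>lborel) \<le> (\<integral>\<^sup>+u. (\<Sum>m. G m u) \<partial>lborel)"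
    by (intro nn_integral_mono pt)
  also have "\<dots> = (\<Sum>m. \<integral>\<^sup>+u. G m u \<partial>lborel)"
    by (rule nn_integral_suminf[OF mG])
  also have "\<dots> \<le> (\<Sum>m. ennreal (a m * (2 * sqrt (2*T) * L2norm T f)))"
  proof (intro suminf_le summableI)
    fix m
    have "(\<integral>\<^sup>+u. G m u \<partial>lborel) = ennreal (a m) * ((\<integral>\<^sup>+u. ennreal (cmod (f (t - u))) * indicator {real m * T..real m * T + T} u \<partial>lborel)
      + (\<integral>\<^sup>+u. ennreal (cmod (f (t - u))) * indicator {-(real m * T) - T..(-(real m * T) - T) + T} u \<partial>lborel))"
      unfolding G_def using D(2)
      by (subst nn_integral_cmult; (subst nn_integral_add)?; measurable?; simp?)
    also have "\<dots> \<le> ennreal (a m) * (ennreal (sqrt (2*T) * L2norm T f) + ennreal (sqrt (2*T) * L2norm T f))"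
      by (intro mult_left_mono add_mono refl_interval[OF assms(1,2)]) auto
    also have "\<dots> = ennreal (a m * (2 * sqrt (2*T) * L2norm T f))"
      using L2norm_nonneg[of T f] assms(2) unfolding a_def
      by (simp add: ennreal_mult'[symmetric] ennreal_plus[symmetric] del: ennreal_plus)
    finally show "(\<integral>\<^sup>+u. G m u \<partial>lborel) \<le> ennreal (a m * (2 * sqrt (2*T) * L2norm T f))" .
  qed
  also have "\<dots> = ennreal (\<Sum>m. a m * (2 * sqrt (2*T) * L2norm T f))"
    using summable_grid[OF assms(2,3)] L2norm_nonneg[of T f] assms(2) unfolding a_def
    by (intro suminf_ennreal2) (auto intro: summable_mult2)
  also have "(\<Sum>m. a m * (2 * sqrt (2*T) * L2norm T f)) = Mc p T * L2norm T f"
    using summable_grid[OF assms(2,3)] unfolding a_def Mc_def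
    by (subst suminf_mult2[symmetric]) (auto simp: mult_ac)
  finally show ?thesis .
qed

definition Op :: "(real \<Rightarrow> real \<Rightarrow> complex) \<Rightarrow> (real \<Rightarrow> complex) \<Rightarrow> real \<Rightarrow> complex" where
  "Op h f t = integral\<^sup>L lborel (\<lambda>s. h t s * f (t - s))"

lemma K1b:
  assumes "f \<in> L2S1 T" "T > 0" "p > 1" "0 \<le> C"
    and hm: "h t \<in> borel_measurable borel"
    and hb: "\<And>s. cmod (h t s) \<le> C * wt p s"
  shows "integrable lborel (\<lambda>s. h t s * f (t - s))"
    and "cmod (Op h f t) \<le> C * Mc p T * L2norm T f"
proof -
  note D = L2S1_D[OF assms(1)]
  note fm[measurable] = shift_meas[OF D(2), of t]
  have mm: "(\<lambda>s. h t s * f (t - s)) \<in> borel_measurable lborel"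
    using D(2) hm by measurable
  have "(\<integral>\<^sup>+s. ennreal (norm (h t s * f (t - s))) \<partial>lborel) \<le> (\<integral>\<^sup>+s. ennreal C * ennreal (wt p s * cmod (f (t - s))) \<partial>lborel)"
  proof (intro nn_integral_mono)
    fix s
    have "norm (h t s * f (t - s)) \<le> C * wt p s * cmod (f (t - s))"
      by (simp add: norm_mult mult_right_mono hb)
    then show "ennreal (norm (h t s * f (t - s))) \<le> ennreal C * ennreal (wt p s * cmod (f (t - s)))"
      using assms(4) by (simp add: ennreal_mult'[symmetric] ennreal_leI mult.assoc)
  qed
  also have "\<dots> = ennreal C * (\<integral>\<^sup>+s. ennreal (wt p s * cmod (f (t - s))) \<partial>lborel)"
  proof (intro nn_integral_cmult lb)
    have m1: "(\<lambda>s. cmod (f (t - s))) \<in> borel_measurable borel" using measurable_compose[OF fm borel_measurable_norm] by (simp add: o_def)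
    have "continuous_on UNIV (wt p)" unfolding wt_def
      by (intro continuous_intros) (auto simp: add_pos_nonneg)
    then have m2: "wt p \<in> borel_measurable borel" by (rule borel_measurable_continuous_onI)
    show "(\<lambda>s. ennreal (wt p s * cmod (f (t - s)))) \<in> borel_measurable borel"
      using measurable_compose[OF borel_measurable_times[OF m2 m1] measurable_ennreal] by (simp add: o_def)
  qed
  also have "\<dots> \<le> ennreal C * ennreal (Mc p T * L2norm T f)"
    by (intro mult_left_mono K1[OF assms(1-3)]) auto
  also have "\<dots> = ennreal (C * Mc p T * L2norm T f)"
    using assms(4) by (simp add: ennreal_mult'[symmetric] mult.assoc)
  finally have bd: "(\<integral>\<^sup>+s. ennreal (norm (h t s * f (t - s))) \<partial>lborel) \<le> ennreal (C * Mc p T * L2norm T f)" .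
  show int: "integrable lborel (\<lambda>s. h t s * f (t - s))"
    unfolding integrable_iff_bounded using mm bd by (auto simp: top_unique less_top[symmetric] dest: order.strict_trans1)
  have "ennreal (cmod (Op h f t)) \<le> (\<integral>\<^sup>+s. ennreal (norm (h t s * f (t - s))) \<partial>lborel)"
    unfolding Op_def by (rule integral_norm_bound_ennreal[OF int])
  also note bd
  finally show "cmod (Op h f t) \<le> C * Mc p T * L2norm T f"
    using Mc_nonneg[OF assms(2,3)] L2norm_nonneg[of T f] assms(4)
    by (subst (asm) ennreal_le_iff) auto
qed

lemma K4:
  assumes "0 \<le> T" "0 \<le> B" "\<And>t. t \<in> {0..T} \<Longrightarrow> cmod (F t) \<le> B"
  shows "L2norm T F \<le> sqrt T * B"
proof -
  have "(\<integral>\<^sup>+t. ennreal (indicator {0..T} t *\<^sub>R (cmod (F t))^2) \<partial>lborel) \<le> (\<integral>\<^sup>+t. ennreal (B^2) * indicator {0..T} t \<partial>lborel)"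
  proof (intro nn_integral_mono)
    fix t
    show "ennreal (indicator {0..T} t *\<^sub>R (cmod (F t))^2) \<le> ennreal (B^2) * indicator {0..T} t"
    proof (cases "t \<in> {0..T}")
      case True
      then have "(cmod (F t))^2 \<le> B^2" using assms(3) by (simp add: power_mono)
      then show ?thesis using True by (simp add: ennreal_leI)
    qed simp
  qed
  also have "\<dots> = ennreal (B^2) * emeasure lborel {0..T}"
    by (rule nn_integral_cmult_indicator) simp
  also have "\<dots> = ennreal (B^2 * T)" using assms(1,2) by (simp add: ennreal_mult)
  finally have "(LINT t:{0..T}|lborel. (cmod (F t))^2) \<le> B^2 * T"
    unfolding set_lebesgue_integral_def using assms by (intro integral_real_bounded) auto
  then have "L2norm T F \<le> sqrt (B^2 * T)" unfolding L2norm_def by simp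
  also have "\<dots> = sqrt T * B" using assms by (simp add: real_sqrt_mult)
  finally show ?thesis .
qed



lemma meas_wf:
  assumes "f \<in> L2S1 T"
  shows "(\<lambda>u. ennreal (wt p u * cmod (f (t - u)))) \<in> borel_measurable lborel"
proof (rule lb)
  note D = L2S1_D[OF assms(1)]
  note fm = shift_meas[OF D(2), of t]
  have m1: "(\<lambda>s. cmod (f (t - s))) \<in> borel_measurable borel"
    using measurable_compose[OF fm borel_measurable_norm] by (simp add: o_def)
  have "continuous_on UNIV (wt p)" unfolding wt_def
    by (intro continuous_intros) (auto simp: add_pos_nonneg)
  then have m2: "wt p \<in> borel_measurable borel" by (rule borel_measurable_continuous_onI)
  show "(\<lambda>s. ennreal (wt p s * cmod (f (t - s)))) \<in> borel_measurable borel"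
    using measurable_compose[OF borel_measurable_times[OF m2 m1] measurable_ennreal] by (simp add: o_def)
qed

lemma hcont_t:
  assumes "continuous_on UNIV (\<lambda>z. h (fst z) (snd z))"
  shows "continuous_on UNIV (h t)"
proof -
  have "continuous_on UNIV (\<lambda>s. (\<lambda>z. h (fst z) (snd z)) (t, s))"
    by (rule continuous_on_compose2[OF assms]) (auto intro: continuous_intros)
  then show ?thesis by simp
qed

lemma hmeas_t:
  assumes "continuous_on UNIV (\<lambda>z. h (fst z) (snd z))"
  shows "h t \<in> borel_measurable borel"
  by (rule borel_measurable_continuous_onI[OF hcont_t[OF assms]])

lemma wt_mono:
  assumes "\<bar>u\<bar> \<le> \<bar>v\<bar>" "p \<ge> 0"
  shows "wt p v \<le> wt p u"
  unfolding wt_def using assms by (intro powr_mono2') auto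

lemma K2:
  assumes T: "T > 0" and p: "p > 1" and C: "0 \<le> C"
    and hc: "continuous_on UNIV (\<lambda>z. h (fst z) (snd z))"
    and h0: "\<And>t s. s \<le> 0 \<Longrightarrow> h t s = 0"
    and hb: "\<And>t s. cmod (h t s) \<le> C * wt p s"
    and e: "e > 0"
  shows "\<exists>d>0. \<forall>t f. f \<in> L2S1 T \<longrightarrow> \<bar>t - t0\<bar> < d \<longrightarrow> cmod (Op h f t - Op h f t0) \<le> e * L2norm T f"
proof -
  define q where "q = (1 + p) / 2"
  have q: "1 < q" "q < p" using p unfolding q_def by auto
  define A0 where "A0 = 2 powr (q+1) * C * Mc q T"
  have A0: "0 \<le> A0" unfolding A0_def using Mc_nonneg[OF T q(1)] C by simp
  define e1 where "e1 = e / (2 * (A0 + 1))"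
  have e1: "e1 > 0" using e A0 unfolding e1_def by simp
  have "((\<lambda>R::real. R powr (-(p-q))) \<longlongrightarrow> 0) at_top"
    using q by (intro tendsto_neg_powr filterlim_ident) auto
  then have "eventually (\<lambda>R::real. R powr (-(p-q)) < e1) at_top"
    using e1 by (rule order_tendstoD)
  then obtain N0 where N0: "\<And>R. R \<ge> N0 \<Longrightarrow> R powr (-(p-q)) < e1"
    by (auto simp: eventually_at_top_linorder)
  define R where "R = max N0 2"
  have R: "R \<ge> 2" "R powr (-(p-q)) < e1" using N0 unfolding R_def by auto
  define K' where "K' = 2 powr (q+1) * C * R powr (-(p-q))"
  have K'0: "0 \<le> K'" unfolding K'_def using C by simp
  have K'M: "K' * Mc q T \<le> e/2"
  proof -
    have "K' * Mc q T = A0 * R powr (-(p-q))" unfolding K'_def A0_def by (simp add: mult_ac)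
    also have "\<dots> \<le> A0 * e1" using R(2) A0 by (intro mult_left_mono) auto
    also have "\<dots> = e/2 * (A0 / (A0 + 1))" unfolding e1_def using A0 by (simp add: field_simps)
    also have "\<dots> \<le> e/2" using A0 e by (intro mult_left_le) auto
    finally show ?thesis .
  qed
  define B1 where "B1 = (2 + R) powr p * Mc p T"
  have B1: "0 \<le> B1" unfolding B1_def using Mc_nonneg[OF T p] by simp
  define \<eta> where "\<eta> = e / (2 * (B1 + 1))"
  have \<eta>: "\<eta> > 0" using e B1 unfolding \<eta>_def by simp
  have \<eta>M: "\<eta> * (2 + R) powr p * Mc p T \<le> e/2"
  proof -
    have "\<eta> * (2 + R) powr p * Mc p T = e/2 * (B1 / (B1 + 1))"
      unfolding \<eta>_def B1_def using B1 unfolding B1_def by (simp add: field_simps)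
    also have "\<dots> \<le> e/2" using B1 e by (intro mult_left_le) auto
    finally show ?thesis .
  qed
  define KS where "KS = {t0 - 1..t0 + 1} \<times> {-2..R + 1}"
  have "uniformly_continuous_on KS (\<lambda>z. h (fst z) (snd z))"
    unfolding KS_def by (intro compact_uniformly_continuous continuous_on_subset[OF hc] compact_Times compact_Icc) auto
  then obtain \<delta> where \<delta>: "\<delta> > 0" and uc: "\<And>x x'. x \<in> KS \<Longrightarrow> x' \<in> KS \<Longrightarrow> dist x' x < \<delta> \<Longrightarrow>
      dist (h (fst x') (snd x')) (h (fst x) (snd x)) < \<eta>"
    unfolding uniformly_continuous_on_def using \<eta> by metis
  define d where "d = min 1 (\<delta>/2)"
  have d: "d > 0" using \<delta> unfolding d_def by simp
  show ?thesis
  proof (intro exI[of _ d] conjI allI impI d)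
    fix t f assume f: "f \<in> L2S1 T" and tt: "\<bar>t - t0\<bar> < d"
    note D = L2S1_D[OF f]
    define dd where "dd = t - t0"
    have dd: "\<bar>dd\<bar> < 1" "\<bar>dd\<bar> < \<delta>/2" using tt unfolding dd_def d_def by auto
    have int_t: "integrable lborel (\<lambda>s. h t s * f (t - s))"
      by (rule K1b(1)[OF f T p C hmeas_t[OF hc] hb])
    have int_t0: "integrable lborel (\<lambda>s. h t0 s * f (t0 - s))"
      by (rule K1b(1)[OF f T p C hmeas_t[OF hc] hb])
    have sh: "Op h f t = integral\<^sup>L lborel (\<lambda>u. h t (dd + u) * f (t0 - u))"
    proof -
      have "Op h f t = \<bar>1\<bar> *\<^sub>R integral\<^sup>L lborel (\<lambda>u. h t (dd + 1 * u) * f (t - (dd + 1 * u)))"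
        unfolding Op_def by (rule lborel_integral_real_affine) simp
      then show ?thesis unfolding dd_def by simp
    qed
    have int_sh: "integrable lborel (\<lambda>u. h t (dd + u) * f (t0 - u))"
    proof -
      have "integrable lborel (\<lambda>u. h t (dd + 1 * u) * f (t - (dd + 1 * u)))"
        using int_t by (subst lborel_integrable_real_affine_iff) auto
      then show ?thesis unfolding dd_def by simp
    qed
    have diff: "Op h f t - Op h f t0 = integral\<^sup>L lborel (\<lambda>u. (h t (dd + u) - h t0 u) * f (t0 - u))"
    proof -
      have "Op h f t - Op h f t0 = integral\<^sup>L lborel (\<lambda>u. h t (dd + u) * f (t0 - u)) - integral\<^sup>L lborel (\<lambda>s. h t0 s * f (t0 - s))"
        using sh by (simp add: Op_def)
      also have "\<dots> = integral\<^sup>L lborel (\<lambda>u. h t (dd + u) * f (t0 - u) - h t0 u * f (t0 - u))"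
        by (rule Bochner_Integration.integral_diff[OF int_sh int_t0, symmetric])
      also have "\<dots> = integral\<^sup>L lborel (\<lambda>u. (h t (dd + u) - h t0 u) * f (t0 - u))"
        by (simp add: algebra_simps)
      finally show ?thesis .
    qed
    have int_diff: "integrable lborel (\<lambda>u. (h t (dd + u) - h t0 u) * f (t0 - u))"
      using Bochner_Integration.integrable_diff[OF int_sh int_t0] by (simp add: algebra_simps)
    have pt: "cmod (h t (dd + u) - h t0 u) \<le> \<eta> * (2 + R) powr p * wt p u + K' * wt q u" for u
    proof -
      have nn: "0 \<le> \<eta> * (2 + R) powr p * wt p u" "0 \<le> K' * wt q u"
        using \<eta> K'0 wt_nonneg by auto
      consider "u < -1" | "-1 \<le> u" "u \<le> R" | "R < u" by linarith
      then show ?thesis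
      proof cases
        case 1
        then have "dd + u \<le> 0" "u \<le> 0" using dd by auto
        then show ?thesis using nn h0 by simp
      next
        case 2
        have in1: "(t, dd + u) \<in> KS" using 2 dd R unfolding KS_def dd_def by auto
        have in2: "(t0, u) \<in> KS" using 2 R unfolding KS_def by auto
        have "dist (t, dd + u) (t0, u) = sqrt (dd^2 + dd^2)"
          by (simp add: dist_Pair_Pair dist_real_def dd_def)
        also have "\<dots> = sqrt 2 * \<bar>dd\<bar>" by (simp add: real_sqrt_mult)
        also have "\<dots> \<le> 2 * \<bar>dd\<bar>" by (intro mult_right_mono) (auto simp: real_sqrt_le_iff[of 2 4, simplified])
        also have "\<dots> < \<delta>" using dd by simp
        finally have "cmod (h t (dd + u) - h t0 u) < \<eta>"
          using uc[OF in2 in1] by (simp add: dist_norm)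
        also have "\<eta> \<le> \<eta> * (2 + R) powr p * wt p u"
        proof -
          have "(2 + R) powr (-p) \<le> wt p u"
            unfolding wt_def using 2 R p by (intro powr_mono2') auto
          then have "(2 + R) powr p * (2 + R) powr (-p) \<le> (2 + R) powr p * wt p u"
            by (intro mult_left_mono) auto
          moreover have "(2 + R) powr p * (2 + R) powr (-p) = 1"
            using R by (simp add: powr_add[symmetric])
          ultimately have "1 \<le> (2 + R) powr p * wt p u" by simp
          then show ?thesis using \<eta> by (simp add: mult.assoc mult_le_cancel_left1)
        qed
        finally show ?thesis using nn by simp
      next
        case 3
        have u0: "u > 0" using 3 R by simp
        have a1: "wt p (dd + u) \<le> u powr (-p)"
          unfolding wt_def using dd u0 p by (intro powr_mono2') auto
        have a2: "wt p u \<le> u powr (-p)"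
          unfolding wt_def using u0 p by (intro powr_mono2') auto
        have "cmod (h t (dd + u) - h t0 u) \<le> cmod (h t (dd + u)) + cmod (h t0 u)" by (rule norm_triangle_ineq4)
        also have "\<dots> \<le> C * wt p (dd + u) + C * wt p u" by (intro add_mono hb)
        also have "\<dots> \<le> C * u powr (-p) + C * u powr (-p)"
          using a1 a2 C by (intro add_mono mult_left_mono) auto
        also have "\<dots> = 2 * C * (u powr (-(p-q)) * u powr (-q))"
          using u0 by (simp add: powr_add[symmetric])
        also have "\<dots> \<le> 2 * C * (R powr (-(p-q)) * (2 powr q * wt q u))"
        proof (intro mult_left_mono mult_mono)
          show "u powr (-(p-q)) \<le> R powr (-(p-q))" using 3 R q by (intro powr_mono2') auto
          have "u powr (-q) = (2 * u) powr (-q) * 2 powr q"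
            using u0 by (simp add: powr_mult powr_minus field_simps)
          also have "(2 * u) powr (-q) \<le> wt q u"
            unfolding wt_def using u0 3 R q by (intro powr_mono2') auto
          finally show "u powr (-q) \<le> 2 powr q * wt q u" by (simp add: mult.commute mult_right_mono)
        qed (use C wt_nonneg in auto)
        also have "\<dots> = K' * wt q u"
          unfolding K'_def by (simp add: powr_add mult_ac)
        finally show ?thesis using nn by simp
      qed
    qed
    have "ennreal (cmod (Op h f t - Op h f t0)) \<le> (\<integral>\<^sup>+u. ennreal (norm ((h t (dd + u) - h t0 u) * f (t0 - u))) \<partial>lborel)"
      unfolding diff by (rule integral_norm_bound_ennreal[OF int_diff])
    also have "\<dots> \<le> (\<integral>\<^sup>+u. ennreal (\<eta> * (2 + R) powr p) * ennreal (wt p u * cmod (f (t0 - u)))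
                   + ennreal K' * ennreal (wt q u * cmod (f (t0 - u))) \<partial>lborel)"
    proof (intro nn_integral_mono)
      fix u
      have "norm ((h t (dd + u) - h t0 u) * f (t0 - u)) \<le> (\<eta> * (2 + R) powr p * wt p u + K' * wt q u) * cmod (f (t0 - u))"
        unfolding norm_mult by (intro mult_right_mono pt) auto
      also have "\<dots> = (\<eta> * (2 + R) powr p) * (wt p u * cmod (f (t0 - u))) + K' * (wt q u * cmod (f (t0 - u)))"
        by (simp add: algebra_simps)
      finally have "ennreal (norm ((h t (dd + u) - h t0 u) * f (t0 - u))) \<le>
          ennreal ((\<eta> * (2 + R) powr p) * (wt p u * cmod (f (t0 - u))) + K' * (wt q u * cmod (f (t0 - u))))"
        by (rule ennreal_leI)
      also have "\<dots> = ennreal (\<eta> * (2 + R) powr p) * ennreal (wt p u * cmod (f (t0 - u)))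
                   + ennreal K' * ennreal (wt q u * cmod (f (t0 - u)))"
      proof -
        have n1: "0 \<le> (\<eta> * (2 + R) powr p) * (wt p u * cmod (f (t0 - u)))" using \<eta> wt_nonneg by simp
        have n2: "0 \<le> K' * (wt q u * cmod (f (t0 - u)))" using K'0 wt_nonneg by simp
        show ?thesis using \<eta> K'0 wt_nonneg by (subst ennreal_plus[OF n1 n2]) (simp add: ennreal_mult)
      qed
      finally show "ennreal (norm ((h t (dd + u) - h t0 u) * f (t0 - u))) \<le> \<dots>" .
    qed
    also have "\<dots> = ennreal (\<eta> * (2 + R) powr p) * (\<integral>\<^sup>+u. ennreal (wt p u * cmod (f (t0 - u))) \<partial>lborel)
                   + ennreal K' * (\<integral>\<^sup>+u. ennreal (wt q u * cmod (f (t0 - u))) \<partial>lborel)"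
      using meas_wf[OF f] by (simp add: nn_integral_add nn_integral_cmult)
    also have "\<dots> \<le> ennreal (\<eta> * (2 + R) powr p) * ennreal (Mc p T * L2norm T f)
                   + ennreal K' * ennreal (Mc q T * L2norm T f)"
      by (intro add_mono mult_left_mono K1[OF f T p] K1[OF f T q(1)]) auto
    also have "\<dots> = ennreal ((\<eta> * (2 + R) powr p * Mc p T + K' * Mc q T) * L2norm T f)"
      using \<eta> K'0 L2norm_nonneg[of T f] Mc_nonneg[OF T p] Mc_nonneg[OF T q(1)]
      by (simp add: ennreal_plus[symmetric] ennreal_mult[symmetric] algebra_simps del: ennreal_plus)
    also have "\<dots> \<le> ennreal (e * L2norm T f)"
      using \<eta>M K'M L2norm_nonneg[of T f] by (intro ennreal_leI mult_right_mono) auto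
    finally show "cmod (Op h f t - Op h f t0) \<le> e * L2norm T f"
      using e L2norm_nonneg[of T f] by (subst (asm) ennreal_le_iff) auto
  qed
qed



lemma Op_cont:
  assumes T: "T > 0" and p: "p > 1" and C: "0 \<le> C"
    and hc: "continuous_on UNIV (\<lambda>z. h (fst z) (snd z))"
    and h0: "\<And>t s. s \<le> 0 \<Longrightarrow> h t s = 0"
    and hb: "\<And>t s. cmod (h t s) \<le> C * wt p s"
    and f: "f \<in> L2S1 T"
  shows "continuous_on UNIV (Op h f)"
proof -
  have "isCont (Op h f) t0" for t0
    unfolding continuous_at_eps_delta
  proof (intro allI impI)
    fix e :: real assume e: "e > 0"
    define e' where "e' = e / (2 * (L2norm T f + 1))"
    have e': "e' > 0" using e L2norm_nonneg[of T f] unfolding e'_def by (simp add: add_nonneg_pos)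
    obtain d where d: "d > 0" and dd: "\<And>t. \<bar>t - t0\<bar> < d \<Longrightarrow> cmod (Op h f t - Op h f t0) \<le> e' * L2norm T f"
      using K2[OF T p C hc h0 hb e', of t0] f by blast
    have "e' * L2norm T f < e"
    proof -
      have "e' * L2norm T f = e / 2 * (L2norm T f / (L2norm T f + 1))"
        unfolding e'_def using L2norm_nonneg[of T f] by (simp add: field_simps)
      also have "\<dots> \<le> e / 2" using e L2norm_nonneg[of T f] by (intro mult_left_le) auto
      finally show ?thesis using e by simp
    qed
    then show "\<exists>d>0. \<forall>x'. dist x' t0 < d \<longrightarrow> dist (Op h f x') (Op h f t0) < e"
      using d dd by (intro exI[of _ d]) (auto simp: dist_norm dist_real_def intro: le_less_trans)
  qed
  then show ?thesis by (simp add: continuous_on_eq_continuous_at)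
qed

lemma Op_L2:
  assumes T: "T > 0" and p: "p > 1" and C: "0 \<le> C"
    and hc: "continuous_on UNIV (\<lambda>z. h (fst z) (snd z))"
    and h0: "\<And>t s. s \<le> 0 \<Longrightarrow> h t s = 0"
    and hb: "\<And>t s. cmod (h t s) \<le> C * wt p s"
    and hp: "\<And>t s. h (t + T) s = h t s"
    and f: "f \<in> L2S1 T"
  shows "Op h f \<in> L2S1 T"
proof -
  note D = L2S1_D[OF f]
  have c: "continuous_on UNIV (Op h f)" by (rule Op_cont[OF T p C hc h0 hb f])
  have per: "Op h f (t + T) = Op h f t" for t
  proof -
    have "f (t + T - s) = f (t - s)" for s
      using D(1)[rule_format, of "t - s"] by (simp add: algebra_simps)
    then show ?thesis unfolding Op_def by (simp add: hp)
  qed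
  have m: "Op h f \<in> borel_measurable lborel"
    by (intro lb borel_measurable_continuous_onI c)
  have "continuous_on {0..T} (\<lambda>t. (cmod (Op h f t))^2)"
    by (intro continuous_intros continuous_on_subset[OF c]) auto
  then have i: "set_integrable lborel {0..T} (\<lambda>t. (cmod (Op h f t))^2)"
    by (rule borel_integrable_atLeastAtMost')
  show ?thesis unfolding L2S1_def using per m i by auto
qed

lemma Op_linear:
  assumes T: "T > 0" and p: "p > 1" and C: "0 \<le> C"
    and hm: "\<And>t. h t \<in> borel_measurable borel"
    and hb: "\<And>t s. cmod (h t s) \<le> C * wt p s"
    and f: "f \<in> L2S1 T" and g: "g \<in> L2S1 T"
  shows "Op h (\<lambda>x. a * f x + g x) t = a * Op h f t + Op h g t"
proof -
  have i1: "integrable lborel (\<lambda>s. h t s * f (t - s))" by (rule K1b(1)[OF f T p C hm hb])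
  have i2: "integrable lborel (\<lambda>s. h t s * g (t - s))" by (rule K1b(1)[OF g T p C hm hb])
  have "Op h (\<lambda>x. a * f x + g x) t = integral\<^sup>L lborel (\<lambda>s. a * (h t s * f (t - s)) + h t s * g (t - s))"
    unfolding Op_def by (simp add: algebra_simps)
  also have "\<dots> = integral\<^sup>L lborel (\<lambda>s. a * (h t s * f (t - s))) + integral\<^sup>L lborel (\<lambda>s. h t s * g (t - s))"
    by (rule Bochner_Integration.integral_add) (use i1 i2 in auto)
  also have "\<dots> = a * Op h f t + Op h g t"
    unfolding Op_def by simp
  finally show ?thesis .
qed

lemma L2norm_zero: "(\<And>t. F t = 0) \<Longrightarrow> L2norm T F = 0"
  unfolding L2norm_def by simp

lemma Op_compact:
  assumes T: "T > 0" and p: "p > 1" and C: "0 \<le> C"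
    and hc: "continuous_on UNIV (\<lambda>z. h (fst z) (snd z))"
    and h0: "\<And>t s. s \<le> 0 \<Longrightarrow> h t s = 0"
    and hb: "\<And>t s. cmod (h t s) \<le> C * wt p s"
    and hp: "\<And>t s. h (t + T) s = h t s"
  shows "compact_op_L2 T (Op h)"
  unfolding compact_op_L2_def
proof (intro conjI ballI allI impI)
  fix f assume f: "f \<in> L2S1 T"
  show "Op h f \<in> L2S1 T" apply (rule Op_L2) using T apply assumption using p apply assumption using C apply assumption
     using hc apply assumption  using h0 apply assumption using hb apply assumption using hp apply assumption using f apply assumption done
next
  fix f g a assume f: "f \<in> L2S1 T" and g: "g \<in> L2S1 T"
  show "L2norm T (\<lambda>t. Op h (\<lambda>x. a * f x + g x) t - (a * Op h f t + Op h g t)) = 0"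
    by (rule L2norm_zero) (simp add: Op_linear[OF T p C hmeas_t[OF hc] hb f g])
next
  fix F :: "nat \<Rightarrow> real \<Rightarrow> complex"
  assume F: "\<forall>n. F n \<in> L2S1 T" and "\<exists>B. \<forall>n. L2norm T (F n) \<le> B"
  then obtain B where B: "\<And>n. L2norm T (F n) \<le> B" by blast
  have B0: "0 \<le> B" using B[of 0] L2norm_nonneg[of T "F 0"] by simp
  define \<F> where "\<F> n x = Op h (F n) x" for n x
  have bd: "norm (\<F> n x) \<le> C * Mc p T * B" for n x
  proof -
    have "norm (\<F> n x) \<le> C * Mc p T * L2norm T (F n)"
      unfolding \<F>_def by (rule K1b(2)[OF F[rule_format] T p C hmeas_t[OF hc] hb])
    also have "\<dots> \<le> C * Mc p T * B"
      using C Mc_nonneg[OF T p] B by (intro mult_left_mono) auto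
    finally show ?thesis .
  qed
  have eq: "\<exists>d. 0 < d \<and> (\<forall>n y. y \<in> {0..T} \<and> norm (x - y) < d \<longrightarrow> norm (\<F> n x - \<F> n y) < e)"
    if "x \<in> {0..T}" "0 < e" for x e
  proof -
    define e' where "e' = e / (2 * (B + 1))"
    have e': "e' > 0" using that B0 unfolding e'_def by (simp add: add_nonneg_pos)
    obtain d where d: "d > 0" and dd: "\<And>t f. f \<in> L2S1 T \<Longrightarrow> \<bar>t - x\<bar> < d \<Longrightarrow> cmod (Op h f t - Op h f x) \<le> e' * L2norm T f"
      using K2[OF T p C hc h0 hb e', of x] by blast
    have lt: "e' * B < e"
    proof -
      have "e' * B = e / 2 * (B / (B + 1))"
        unfolding e'_def using B0 by (simp add: field_simps)
      also have "\<dots> \<le> e / 2" using that B0 by (intro mult_left_le) auto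
      finally show ?thesis using that by simp
    qed
    show ?thesis
    proof (intro exI[of _ d] conjI allI impI d)
      fix n y assume "y \<in> {0..T} \<and> norm (x - y) < d"
      then have "\<bar>y - x\<bar> < d" by (simp add: abs_minus_commute)
      then have "cmod (\<F> n y - \<F> n x) \<le> e' * L2norm T (F n)"
        unfolding \<F>_def by (rule dd[OF F[rule_format]])
      also have "\<dots> \<le> e' * B" using e' B by (intro mult_left_mono) auto
      finally show "norm (\<F> n x - \<F> n y) < e" using lt by (simp add: norm_minus_commute)
    qed
  qed
  have bd': "\<And>n x. x \<in> {0..T} \<Longrightarrow> norm (\<F> n x) \<le> C * Mc p T * B" by (rule bd)
  have "\<exists>g k. strict_mono (k :: nat \<Rightarrow> nat) \<and> (\<forall>e>0. \<exists>N. \<forall>n x. n \<ge> N \<and> x \<in> {0..T} \<longrightarrow> norm (\<F> (k n) x - g x) < e)"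
  proof (rule Arzela_Ascoli[OF compact_Icc bd' eq])
    fix g k assume "continuous_on {0..T} g" "strict_mono (k::nat\<Rightarrow>nat)"
      and c: "\<And>e. 0 < e \<Longrightarrow> \<exists>N. \<forall>n x. N \<le> n \<and> x \<in> {0..T} \<longrightarrow> norm (\<F> (k n) x - g x) < e"
    then show "\<exists>g k. strict_mono (k :: nat \<Rightarrow> nat) \<and> (\<forall>e>0. \<exists>N. \<forall>n x. n \<ge> N \<and> x \<in> {0..T} \<longrightarrow> norm (\<F> (k n) x - g x) < e)"
      by (intro exI[of _ g] exI[of _ k] conjI allI impI) auto
  qed
  then obtain g k where kmono: "strict_mono (k :: nat \<Rightarrow> nat)"
    and conv: "\<And>e. 0 < e \<Longrightarrow> \<exists>N. \<forall>n x. n \<ge> N \<and> x \<in> {0..T} \<longrightarrow> norm (\<F> (k n) x - g x) < e"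
    by blast
  show "\<exists>r::nat\<Rightarrow>nat. strict_mono r \<and> (\<forall>e>0. \<exists>N. \<forall>m\<ge>N. \<forall>n\<ge>N. L2norm T (\<lambda>t. Op h (F (r m)) t - Op h (F (r n)) t) < e)"
  proof (rule exI[where x=k], intro conjI kmono allI impI)
    fix e :: real assume e: "e > 0"
    define e1 where "e1 = e / (4 * (sqrt T + 1))"
    have e1: "e1 > 0" using e T unfolding e1_def by (intro divide_pos_pos) (auto intro: add_nonneg_pos)
    obtain N where N: "\<And>n x. n \<ge> N \<Longrightarrow> x \<in> {0..T} \<Longrightarrow> norm (\<F> (k n) x - g x) < e1"
      using conv[OF e1] by blast
    show "\<exists>N. \<forall>m\<ge>N. \<forall>n\<ge>N. L2norm T (\<lambda>t. Op h (F (k m)) t - Op h (F (k n)) t) < e"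
    proof (intro exI[of _ N] allI impI)
      fix m n assume m: "m \<ge> N" and n: "n \<ge> N"
      have "L2norm T (\<lambda>t. Op h (F (k m)) t - Op h (F (k n)) t) \<le> sqrt T * (2 * e1)"
      proof (rule K4)
        fix t :: real assume t: "t \<in> {0..T}"
        have "cmod (Op h (F (k m)) t - Op h (F (k n)) t) \<le> norm (\<F> (k m) t - g t) + norm (\<F> (k n) t - g t)"
          unfolding \<F>_def
          using norm_triangle_ineq4[of "Op h (F (k m)) t - g t" "Op h (F (k n)) t - g t"] by simp
        also have "\<dots> \<le> 2 * e1" using N[OF m t] N[OF n t] by simp
        finally show "cmod (Op h (F (k m)) t - Op h (F (k n)) t) \<le> 2 * e1" .
      qed (use T e1 in auto)
      also have "\<dots> < e"
      proof -
        have sT: "0 < sqrt T + 1" using T by (simp add: add_nonneg_pos)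
        have eq1: "e1 * (4 * (sqrt T + 1)) = e" unfolding e1_def using sT by simp
        have "sqrt T * (2 * e1) \<le> (sqrt T + 1) * (2 * e1)" using e1 by (intro mult_right_mono) auto
        also have "\<dots> = e / 2" using eq1 by (simp add: algebra_simps)
        finally show ?thesis using e by simp
      qed
      finally show "L2norm T (\<lambda>t. Op h (F (k m)) t - Op h (F (k n)) t) < e" .
    qed
  qed
qed



lemma per_bounded:
  fixes g :: "real \<Rightarrow> real"
  assumes "continuous_on UNIV g" "\<forall>t. g (t + T) = g t" "T > 0"
  shows "\<exists>B. \<forall>x. \<bar>g x\<bar> \<le> B"
proof -
  have "compact (g ` {0..T})"
    by (rule compact_continuous_image[OF continuous_on_subset[OF assms(1)]]) auto
  then have "bounded (g ` {0..T})" by (rule compact_imp_bounded)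
  then obtain B where B: "\<And>y. y \<in> g ` {0..T} \<Longrightarrow> norm y \<le> B"
    unfolding bounded_iff by blast
  have "\<bar>g x\<bar> \<le> B" for x
  proof -
    define n where "n = floor (x / T)"
    have "real_of_int n \<le> x/T" "x/T < real_of_int n + 1" using n_def by linarith+
    then have n1: "real_of_int n * T \<le> x" and n2: "x < real_of_int n * T + T"
      using assms(3) by (simp_all add: le_divide_eq divide_less_eq algebra_simps)
    define r where "r = x - real_of_int n * T"
    have r: "r \<in> {0..T}" using n1 n2 unfolding r_def by auto
    have "g x = g (r + real_of_int n * T)" unfolding r_def by simp
    also have "\<dots> = g r" by (rule per_int[OF assms(2)])
    finally show ?thesis using B[of "g r"] r by auto
  qed
  then show ?thesis by blast
qed

lemma c_facts:
  fixes c :: "real \<Rightarrow> real"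
  assumes d: "\<forall>k x. ((deriv ^^ k) c) differentiable (at x)"
    and per: "\<forall>t. c (t + T) = c t" and T: "T > 0"
  shows "continuous_on UNIV c"
    and "\<exists>L\<ge>0. \<forall>t s. 0 < s \<longrightarrow> \<bar>c t - c (t - s)\<bar> \<le> L * s"
    and "\<exists>M\<ge>0. \<forall>t. \<bar>c t\<bar> \<le> M"
proof -
  have D: "(c has_real_derivative deriv c x) (at x)" for x
    using d[rule_format, of 0 x] by (simp add: DERIV_deriv_iff_real_differentiable)
  show cc: "continuous_on UNIV c"
    using d[rule_format, of 0] by (auto intro!: continuous_at_imp_continuous_on differentiable_imp_continuous_within)
  then obtain M where M: "\<And>x. \<bar>c x\<bar> \<le> M" using per_bounded[OF cc per T] by blast
  have "0 \<le> M" using M[of 0] by linarith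
  then show "\<exists>M\<ge>0. \<forall>t. \<bar>c t\<bar> \<le> M" using M by blast
  have dc: "continuous_on UNIV (deriv c)"
    using d[rule_format, of 1] by (auto intro!: continuous_at_imp_continuous_on differentiable_imp_continuous_within)
  have dper: "\<forall>x. deriv c (x + T) = deriv c x"
  proof
    fix x
    have "((\<lambda>y. c (y + T)) has_real_derivative deriv c (x + T)) (at x)"
      using D[of "x + T"] by (simp add: DERIV_shift)
    moreover have "(\<lambda>y. c (y + T)) = c" using per by auto
    ultimately have "(c has_real_derivative deriv c (x + T)) (at x)" by simp
    then show "deriv c (x + T) = deriv c x" using D[of x] by (rule DERIV_unique)
  qed
  obtain L where L: "\<And>x. \<bar>deriv c x\<bar> \<le> L" using per_bounded[OF dc dper T] by blast
  have L0: "0 \<le> L" using L[of 0] by auto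
  have "\<bar>c t - c (t - s)\<bar> \<le> L * s" if s: "0 < s" for t s
  proof -
    obtain z where "c t - c (t - s) = (t - (t - s)) * deriv c z"
      using MVT2[of "t - s" t c "deriv c"] D s by auto
    then have "\<bar>c t - c (t - s)\<bar> = s * \<bar>deriv c z\<bar>" using s by (simp add: abs_mult)
    also have "\<dots> \<le> s * L" using s L by (intro mult_left_mono) auto
    finally show ?thesis by (simp add: mult.commute)
  qed
  then show "\<exists>L\<ge>0. \<forall>t s. 0 < s \<longrightarrow> \<bar>c t - c (t - s)\<bar> \<le> L * s" using L0 by blast
qed

definition g0 :: "(real \<Rightarrow> real) \<Rightarrow> real \<Rightarrow> real \<Rightarrow> complex" where
  "g0 c t s = (if 0 < s then (exp (\<i> * of_real ((c t - c (t - s))^2 / (4 * s))) - 1) / of_real (sqrt s) else 0)"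

lemma exp_i_minus_1: "cmod (exp (\<i> * of_real x) - 1) \<le> \<bar>x\<bar>"
proof -
  have "cmod (exp (\<i> * of_real x) - 1) = 2 * \<bar>sin (x / 2)\<bar>" by (rule dist_exp_i_1)
  also have "\<dots> \<le> 2 * \<bar>x / 2\<bar>" by (intro mult_left_mono abs_sin_x_le_abs_x) auto
  finally show ?thesis by simp
qed

lemma wt32: "0 \<le> s \<Longrightarrow> wt (3/2) s = 1 / ((1 + s) * sqrt (1 + s))"
proof -
  assume s: "0 \<le> s"
  have e1: "(1 + s) powr (3/2) = (1 + s) powr (1 + 1/2)" by (rule arg_cong[where f="\<lambda>a. (1+s) powr a"]) simp
  have e2: "(1 + s) powr (1 + 1/2) = (1 + s) powr 1 * (1 + s) powr (1/2)" by (rule powr_add)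
  have e3: "(1 + s) powr 1 * (1 + s) powr (1/2) = (1 + s) * sqrt (1 + s)" using s by (simp add: powr_half_sqrt)
  have e: "(1 + s) powr (3/2) = (1 + s) * sqrt (1 + s)" using e1 e2 e3 by (rule trans[OF trans])
  have "wt (3/2) s = (1 + s) powr (-(3/2))" unfolding wt_def using s by simp
  also have "\<dots> = inverse ((1 + s) powr (3/2))" by (rule powr_minus)
  also have "\<dots> = 1 / ((1 + s) * sqrt (1 + s))" unfolding e by (rule inverse_eq_divide)
  finally show ?thesis .
qed

lemma g0_bounds:
  assumes L: "\<forall>t s. 0 < s \<longrightarrow> \<bar>c t - c (t - s)\<bar> \<le> L * s" and M: "\<forall>t. \<bar>c t\<bar> \<le> M"
    and L0: "0 \<le> L" and M0: "0 \<le> M"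
  shows "cmod (g0 c t s) \<le> 3 * (L^2 + M^2) * wt (3/2) s"
    and "0 < s \<Longrightarrow> cmod (g0 c t s) \<le> L^2 / 4 * sqrt s"
proof -
  have main: "cmod (g0 c t s) \<le> min (L^2 / 4 * sqrt s) (M^2 / (s * sqrt s))" if s: "0 < s"
  proof -
    define \<theta> where "\<theta> = (c t - c (t - s))^2 / (4 * s)"
    have th0: "0 \<le> \<theta>" unfolding \<theta>_def using s by simp
    have g: "cmod (g0 c t s) = cmod (exp (\<i> * of_real \<theta>) - 1) / sqrt s"
      unfolding g0_def \<theta>_def using s by (simp add: norm_divide)
    have "\<bar>c t - c (t - s)\<bar>^2 \<le> (L * s)^2"
      by (rule power_mono) (use L s in auto)
    then have "(c t - c (t - s))^2 \<le> (L * s)^2" by simp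
    then have t1: "\<theta> \<le> L^2 * s / 4" unfolding \<theta>_def using s by (simp add: field_simps power2_eq_square)
    have "\<bar>c t - c (t - s)\<bar> \<le> 2 * M" using M[rule_format, of t] M[rule_format, of "t - s"] by linarith
    then have "\<bar>c t - c (t - s)\<bar>^2 \<le> (2 * M)^2" by (rule power_mono) simp
    then have "(c t - c (t - s))^2 \<le> (2 * M)^2" by simp
    then have "\<theta> \<le> (2 * M)^2 / (4 * s)" unfolding \<theta>_def using s by (intro divide_right_mono) auto
    then have t2: "\<theta> \<le> M^2 / s" using s by (simp add: power_mult_distrib)
    have e: "cmod (exp (\<i> * of_real \<theta>) - 1) \<le> \<theta>" using exp_i_minus_1[of \<theta>] th0 by simp
    have sq: "0 < sqrt s" using s by simp
    have "cmod (g0 c t s) \<le> (L^2 * s / 4) / sqrt s"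
      unfolding g using e t1 sq by (intro divide_right_mono) auto
    also have "(L^2 * s / 4) / sqrt s = L^2 / 4 * sqrt s"
      using s by (simp add: field_simps)
    finally have a: "cmod (g0 c t s) \<le> L^2 / 4 * sqrt s" .
    have "cmod (g0 c t s) \<le> (M^2 / s) / sqrt s"
      unfolding g using e t2 sq by (intro divide_right_mono) auto
    then have b: "cmod (g0 c t s) \<le> M^2 / (s * sqrt s)" by (simp add: field_simps)
    show ?thesis using a b by simp
  qed
  show "0 < s \<Longrightarrow> cmod (g0 c t s) \<le> L^2 / 4 * sqrt s" using main by simp
  show "cmod (g0 c t s) \<le> 3 * (L^2 + M^2) * wt (3/2) s"
  proof (cases "0 < s")
    case False
    then show ?thesis unfolding g0_def using wt_nonneg[of "3/2" s] by simp
  next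
    case s: True
    have sq2: "sqrt 2 \<le> 3/2"
    proof -
      have "sqrt 2 \<le> sqrt ((3/2)^2)" by (rule real_sqrt_le_mono) (simp add: power2_eq_square)
      then show ?thesis by simp
    qed
    show ?thesis
    proof (cases "s \<le> 1")
      case True
      have "(1 + s) * sqrt (1 + s) \<le> 2 * sqrt 2"
        using True s by (intro mult_mono) auto
      also have "\<dots> \<le> 3" using sq2 by simp
      finally have "(1 + s) * sqrt (1 + s) \<le> 3" .
      then have "1/3 \<le> 1 / ((1 + s) * sqrt (1 + s))"
        using s by (intro divide_left_mono) auto
      then have w: "1/3 \<le> wt (3/2) s" using s by (simp add: wt32)
      have "cmod (g0 c t s) \<le> L^2 / 4 * sqrt s" using main s by simp
      also have "\<dots> \<le> L^2 / 4" using True s by (intro mult_left_le) auto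
      also have "\<dots> \<le> (L^2 + M^2) * (3 * (1/3))" by simp
      also have "\<dots> \<le> (L^2 + M^2) * (3 * wt (3/2) s)" using w by (intro mult_left_mono) auto
      finally show ?thesis by (simp add: algebra_simps)
    next
      case False
      have "(1 + s) * sqrt (1 + s) \<le> (2 * s) * (sqrt 2 * sqrt s)"
        using False s by (intro mult_mono) (auto simp: real_sqrt_mult[symmetric])
      also have "\<dots> \<le> (2 * s) * (3/2 * sqrt s)"
        using sq2 s by (intro mult_left_mono mult_right_mono) auto
      finally have w: "(1 + s) * sqrt (1 + s) \<le> 3 * (s * sqrt s)" by simp
      have pos: "0 < (1 + s) * sqrt (1 + s)" using s by simp
      have "cmod (g0 c t s) \<le> M^2 / (s * sqrt s)" using main s by simp
      also have "\<dots> = M^2 * (3 / (3 * (s * sqrt s)))" by simp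
      also have "\<dots> \<le> M^2 * (3 / ((1 + s) * sqrt (1 + s)))"
        using w pos s by (intro mult_left_mono divide_left_mono) auto
      also have "\<dots> = M^2 * (3 * wt (3/2) s)"
        using s by (simp add: wt32)
      also have "\<dots> \<le> (L^2 + M^2) * (3 * wt (3/2) s)"
        using wt_nonneg[of "3/2" s] by (intro mult_right_mono) auto
      finally show ?thesis by (simp add: algebra_simps)
    qed
  qed
qed



lemma exp_quad:
  fixes z :: complex
  shows "cmod (exp z - 1 - z) \<le> cmod z ^ 2 * exp (cmod z)"
proof -
  have s1: "(\<lambda>k. z ^ (k + 2) /\<^sub>R fact (k + 2)) sums (exp z - (\<Sum>k<2. z ^ k /\<^sub>R fact k))"
    by (intro sums_split_initial_segment exp_converges)
  have e: "(\<Sum>k<2. z ^ k /\<^sub>R fact k) = 1 + z" by (simp add: eval_nat_numeral)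
  have s2: "(\<lambda>k. cmod z ^ 2 * (cmod z ^ k /\<^sub>R fact k)) sums (cmod z ^ 2 * exp (cmod z))"
    by (intro sums_mult exp_converges)
  have b: "norm (z ^ (k + 2) /\<^sub>R fact (k + 2)) \<le> cmod z ^ 2 * (cmod z ^ k /\<^sub>R fact k)" for k
  proof -
    have f: "fact k \<le> (fact (k + 2) :: real)" by (intro fact_mono) auto
    have gen: "norm (z ^ n /\<^sub>R fact n) = cmod z ^ n / fact n" for n
      by (simp add: norm_power field_simps)
    have "norm (z ^ (k + 2) /\<^sub>R fact (k + 2)) = cmod z ^ 2 * cmod z ^ k / fact (k + 2)"
      unfolding gen by (simp only: power_add mult.commute)
    also have "\<dots> \<le> cmod z ^ 2 * cmod z ^ k / fact k"
      using f by (intro divide_left_mono) (auto simp: fact_gt_zero)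
    finally have "norm (z ^ (k + 2) /\<^sub>R fact (k + 2)) \<le> cmod z ^ 2 * cmod z ^ k / fact k" .
    moreover have "cmod z ^ 2 * (cmod z ^ k /\<^sub>R fact k) = cmod z ^ 2 * cmod z ^ k / fact k"
      by (simp add: field_simps)
    ultimately show ?thesis by linarith
  qed
  have "exp z - 1 - z = (\<Sum>k. z ^ (k + 2) /\<^sub>R fact (k + 2))"
    using sums_unique[OF s1] e by (simp add: algebra_simps)
  also have "norm \<dots> \<le> (\<Sum>k. cmod z ^ 2 * (cmod z ^ k /\<^sub>R fact k))"
    by (rule norm_suminf_le[OF b sums_summable[OF s2]])
  also have "\<dots> = cmod z ^ 2 * exp (cmod z)" using sums_unique[OF s2] by simp
  finally show ?thesis .
qed

lemma norm_exp_i_sigma: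
  "cmod (exp (\<i> * \<sigma> * of_real s)) = exp (- Im \<sigma> * s)"
  by (simp add: norm_exp_eq_Re)

lemma norm_exp_i_sigma_le1:
  "Im \<sigma> \<ge> 0 \<Longrightarrow> s \<ge> 0 \<Longrightarrow> cmod (exp (\<i> * \<sigma> * of_real s)) \<le> 1"
  by (simp add: norm_exp_i_sigma)

lemma hol_bound:
  assumes y: "Im \<sigma> > 0" and h: "cmod h \<le> Im \<sigma> / 2" "h \<noteq> 0" and s: "s > 0"
  shows "cmod ((exp (\<i> * (\<sigma> + h) * of_real s) - exp (\<i> * \<sigma> * of_real s)) / h
            - \<i> * of_real s * exp (\<i> * \<sigma> * of_real s)) \<le> cmod h * (8 / (Im \<sigma>)^2)"
proof -
  define w where "w = \<i> * h * of_real s"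
  define y where "y = Im \<sigma>"
  have eq: "(exp (\<i> * (\<sigma> + h) * of_real s) - exp (\<i> * \<sigma> * of_real s)) / h - \<i> * of_real s * exp (\<i> * \<sigma> * of_real s)
      = exp (\<i> * \<sigma> * of_real s) * ((exp w - 1 - w) / h)"
  proof -
    have "exp (\<i> * (\<sigma> + h) * of_real s) = exp (\<i> * \<sigma> * of_real s) * exp w"
      unfolding w_def by (simp add: exp_add[symmetric] algebra_simps)
    moreover have "w / h = \<i> * of_real s" unfolding w_def using h(2) by simp
    ultimately show ?thesis using h(2) by (simp add: field_simps)
  qed
  have nw: "cmod w = cmod h * s" unfolding w_def using s by (simp add: norm_mult)
  have "cmod (exp (\<i> * \<sigma> * of_real s) * ((exp w - 1 - w) / h)) = exp (- y * s) * (cmod (exp w - 1 - w) / cmod h)"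
    unfolding y_def by (simp add: norm_mult norm_divide norm_exp_i_sigma)
  also have "\<dots> \<le> exp (- y * s) * ((cmod h * s)^2 * exp (cmod h * s) / cmod h)"
    using exp_quad[of w] h(2) unfolding nw by (intro mult_left_mono divide_right_mono) auto
  also have "\<dots> = cmod h * (s^2 * (exp (- y * s) * exp (cmod h * s)))"
    using h(2) by (simp add: power2_eq_square field_simps)
  also have "\<dots> \<le> cmod h * (s^2 * exp (- (y * s / 2)))"
  proof -
    have "exp (- y * s) * exp (cmod h * s) = exp (- y * s + cmod h * s)" using exp_add[of "- y * s" "cmod h * s"] by simp
    also have "\<dots> \<le> exp (- (y * s / 2))"
    proof (subst exp_le_cancel_iff)
      have "cmod h * s \<le> y / 2 * s" using h(1) s unfolding y_def by (intro mult_right_mono) auto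
      then show "- y * s + cmod h * s \<le> - (y * s / 2)" by simp
    qed
    finally show ?thesis by (intro mult_left_mono) auto
  qed
  also have "\<dots> \<le> cmod h * (8 / y^2)"
  proof -
    have x0: "0 \<le> y * s / 2" using y s unfolding y_def by simp
    have "(y * s / 2)^2 / 2 \<le> exp (y * s / 2)"
      using exp_lower_Taylor_quadratic[OF x0] x0 by linarith
    then have "y^2 * s^2 / 8 \<le> exp (y * s / 2)" by (simp add: power2_eq_square field_simps)
    then have "s^2 \<le> 8 / y^2 * exp (y * s / 2)"
      using y unfolding y_def by (simp add: field_simps)
    then have "s^2 * exp (- (y * s / 2)) \<le> 8 / y^2 * exp (y * s / 2) * exp (- (y * s / 2))"
      by (intro mult_right_mono) auto
    also have "\<dots> = 8 / y^2" by (simp add: exp_minus field_simps)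
    finally show ?thesis by (intro mult_left_mono) auto
  qed
  finally show ?thesis unfolding eq y_def .
qed

lemma cont_bound:
  assumes "Im \<sigma> \<ge> 0" "Im \<sigma>0 \<ge> 0" "s > 0"
  shows "cmod (exp (\<i> * \<sigma> * of_real s) - exp (\<i> * \<sigma>0 * of_real s)) \<le> 4 * (cmod (\<sigma> - \<sigma>0) * s) powr (1/4)"
proof -
  define x where "x = cmod (\<sigma> - \<sigma>0) * s"
  have x0: "0 \<le> x" unfolding x_def using assms by simp
  show ?thesis
  proof (cases "x \<le> 1")
    case True
    define w where "w = \<i> * (\<sigma> - \<sigma>0) * of_real s"
    have nw: "cmod w = x" unfolding w_def x_def using assms(3) by (simp add: norm_mult)
    have eq: "exp (\<i> * \<sigma> * of_real s) - exp (\<i> * \<sigma>0 * of_real s) = exp (\<i> * \<sigma>0 * of_real s) * (exp w - 1)"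
    proof -
      have "exp (\<i> * \<sigma> * of_real s) = exp (\<i> * \<sigma>0 * of_real s) * exp w"
        unfolding w_def by (simp add: exp_add[symmetric] algebra_simps)
      then show ?thesis by (simp add: algebra_simps)
    qed
    have "cmod (exp w - 1) \<le> cmod w + cmod (exp w - 1 - w)"
      using norm_triangle_ineq[of w "exp w - 1 - w"] by simp
    also have "\<dots> \<le> x + x^2 * exp x" using exp_quad[of w] unfolding nw by simp
    also have "\<dots> \<le> x + x * 3"
    proof -
      have "x^2 \<le> x" using True x0 by (simp add: power2_eq_square mult_left_le)
      moreover have "exp x \<le> 3"
      proof -
        have "exp x \<le> exp 1" using True by simp
        then show ?thesis using exp_le by linarith
      qed
      ultimately have "x^2 * exp x \<le> x * 3" using x0 by (intro mult_mono) auto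
      then show ?thesis by simp
    qed
    also have "\<dots> = 4 * x" by simp
    also have "\<dots> \<le> 4 * x powr (1/4)"
    proof (cases "x = 0")
      case False
      then have "x powr 1 \<le> x powr (1/4)" using True x0 by (intro powr_mono') auto
      then show ?thesis using x0 False by simp
    qed simp
    finally have "cmod (exp w - 1) \<le> 4 * x powr (1/4)" .
    then have "cmod (exp (\<i> * \<sigma>0 * of_real s)) * cmod (exp w - 1) \<le> 1 * (4 * x powr (1/4))"
      using norm_exp_i_sigma_le1[OF assms(2), of s] assms(3) by (intro mult_mono) auto
    then show ?thesis unfolding eq x_def by (simp add: norm_mult)
  next
    case False
    have "cmod (exp (\<i> * \<sigma> * of_real s) - exp (\<i> * \<sigma>0 * of_real s)) \<le> 1 + 1"
      using norm_triangle_ineq4[of "exp (\<i> * \<sigma> * of_real s)" "exp (\<i> * \<sigma>0 * of_real s)"]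
        norm_exp_i_sigma_le1[OF assms(1), of s] norm_exp_i_sigma_le1[OF assms(2), of s] assms(3) by linarith
    also have "\<dots> \<le> 4 * x powr (1/4)" using ge_one_powr_ge_zero[of x "1/4"] False by simp
    finally show ?thesis unfolding x_def .
  qed
qed

lemma g0_cont:
  assumes cc: "continuous_on UNIV c" and K: "0 \<le> K" and kb: "\<And>t s. 0 < s \<Longrightarrow> cmod (g0 c t s) \<le> K * sqrt s"
  shows "continuous_on UNIV (\<lambda>z. g0 c (fst z) (snd z))"
proof (intro continuous_at_imp_continuous_on ballI)
  fix z :: "real \<times> real"
  let ?G = "\<lambda>z. g0 c (fst z) (snd z)"
  consider "snd z > 0" | "snd z < 0" | "snd z = 0" by linarith
  then show "isCont ?G z"
  proof cases
    case 1
    define S where "S = {z::real\<times>real. 0 < snd z}"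
    have oS: "open S" unfolding S_def by (rule open_Collect_less) (auto intro: continuous_intros)
    have c1: "continuous_on S (\<lambda>z. c (fst z))"
      by (rule continuous_on_compose2[OF cc]) (auto intro: continuous_intros)
    have c2: "continuous_on S (\<lambda>z. c (fst z - snd z))"
      by (rule continuous_on_compose2[OF cc]) (auto intro!: continuous_intros)
    have "continuous_on S (\<lambda>z. (exp (\<i> * of_real ((c (fst z) - c (fst z - snd z))^2 / (4 * snd z))) - 1) / of_real (sqrt (snd z)))"
      using c1 c2 by (intro continuous_intros) (auto simp: S_def)
    then have "continuous_on S ?G"
      by (rule continuous_on_cong[THEN iffD1, rotated -1]) (auto simp: S_def g0_def)
    then have "\<forall>x\<in>S. isCont ?G x" using continuous_on_eq_continuous_at[OF oS] by blast
    then show ?thesis using 1 unfolding S_def by blast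
  next
    case 2
    define S where "S = {z::real\<times>real. snd z < 0}"
    have oS: "open S" unfolding S_def by (rule open_Collect_less) (auto intro: continuous_intros)
    have "continuous_on S (\<lambda>z. 0::complex)" by (rule continuous_on_const)
    then have "continuous_on S ?G"
      by (rule continuous_on_cong[THEN iffD1, rotated -1]) (auto simp: S_def g0_def)
    then have "\<forall>x\<in>S. isCont ?G x" using continuous_on_eq_continuous_at[OF oS] by blast
    then show ?thesis using 2 unfolding S_def by blast
  next
    case 3
    have G0: "?G z = 0" using 3 by (simp add: g0_def)
    have "(?G \<longlongrightarrow> 0) (at z)"
    proof (rule Lim_null_comparison)
      show "\<forall>\<^sub>F w in at z. norm (?G w) \<le> K * sqrt \<bar>snd w\<bar>"
      proof (intro always_eventually allI)
        fix w :: "real \<times> real"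
        show "norm (?G w) \<le> K * sqrt \<bar>snd w\<bar>"
        proof (cases "snd w > 0")
          case True then show ?thesis using kb[OF True, of "fst w"] by simp
        qed (use K in \<open>simp add: g0_def\<close>)
      qed
      have "((\<lambda>w. K * sqrt \<bar>snd w\<bar>) \<longlongrightarrow> K * sqrt \<bar>snd z\<bar>) (at z)"
        by (intro tendsto_intros)
      then show "((\<lambda>w. K * sqrt \<bar>snd w\<bar>) \<longlongrightarrow> 0) (at z)" using 3 by simp
    qed
    then show ?thesis unfolding isCont_def G0 .
  qed
qed



lemma wt_54:
  assumes "s > 0"
  shows "wt (3/2) s * s powr (1/4) \<le> wt (5/4) s"
proof -
  have "s powr (1/4) \<le> (1 + s) powr (1/4)" using assms by (intro powr_mono2) auto
  moreover have "wt (3/2) s = (1 + s) powr (-(3/2))" unfolding wt_def using assms by simp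
  ultimately have "wt (3/2) s * s powr (1/4) \<le> (1 + s) powr (-(3/2)) * (1 + s) powr (1/4)"
    by (simp add: mult_left_mono)
  also have "\<dots> = (1 + s) powr (-(3/2) + 1/4)" by (rule powr_add[symmetric])
  also have "\<dots> = wt (5/4) s" unfolding wt_def using assms by simp
  finally show ?thesis .
qed

lemma s_exp_bound:
  assumes y: "(y::real) > 0" and s: "s \<ge> 0"
  shows "s * exp (- y * s) \<le> 1 / y"
proof -
  have "y * s \<le> exp (y * s)" using exp_ge_add_one_self[of "y * s"] by linarith
  then have "s \<le> exp (y * s) / y" using y by (simp add: field_simps)
  then have "s * exp (- y * s) \<le> exp (y * s) / y * exp (- y * s)"
    by (intro mult_right_mono) auto
  also have "\<dots> = 1 / y" by (simp add: exp_minus field_simps)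
  finally show ?thesis .
qed

theorem main_T:
  fixes c :: "real \<Rightarrow> real" and T :: real
  assumes T: "T > 0"
    and d: "\<forall>k x. ((deriv ^^ k) c) differentiable (at x)"
    and per: "\<forall>t. c (t + T) = c t"
  shows "(\<forall>\<sigma>. Im \<sigma> \<ge> 0 \<longrightarrow> compact_op_L2 T (KL c \<sigma>))
       \<and> op_holomorphic_on T (KL c) {\<sigma>. Im \<sigma> > 0}
       \<and> op_continuous_on T (KL c) {\<sigma>. Im \<sigma> \<ge> 0}"
proof -
  note cf = c_facts[OF d per T]
  obtain L where L0: "0 \<le> L" and L: "\<forall>t s. 0 < s \<longrightarrow> \<bar>c t - c (t - s)\<bar> \<le> L * s" using cf(2) by blast
  obtain M where M0: "0 \<le> M" and M: "\<forall>t. \<bar>c t\<bar> \<le> M" using cf(3) by blast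
  note gb = g0_bounds[OF L M L0 M0]
  define cs where "cs = cmod (csqrt (\<i> / of_real pi))"
  define Cg where "Cg = cs * (3 * (L^2 + M^2))"
  have Cg0: "0 \<le> Cg" unfolding Cg_def cs_def by simp
  have p32: "(3/2::real) > 1" and p54: "(5/4::real) > 1" by simp_all
  have g0c: "continuous_on UNIV (\<lambda>z. g0 c (fst z) (snd z))"
    by (rule g0_cont[OF cf(1), of "L^2/4"]) (use gb(2) in auto)
  define Gk where "Gk \<sigma> t s = csqrt (\<i> / of_real pi) * g0 c t s * exp (\<i> * \<sigma> * of_real s)" for \<sigma> t s
  define Dk where "Dk \<sigma> t s = csqrt (\<i> / of_real pi) * g0 c t s * (\<i> * of_real s * exp (\<i> * \<sigma> * of_real s))" for \<sigma> t s
  have KLeq: "KL c \<sigma> f t = Op (Gk \<sigma>) f t" for \<sigma> f t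
  proof -
    have "KL c \<sigma> f t = csqrt (\<i> / of_real pi) * integral\<^sup>L lborel (\<lambda>s. indicator {0<..} s *\<^sub>R
        ((exp (\<i> * of_real ((c t - c (t - s))^2 / (4 * s))) - 1) * exp (\<i> * \<sigma> * of_real s) * f (t - s) / of_real (sqrt s)))"
      unfolding KL_def set_lebesgue_integral_def by simp
    also have "\<dots> = integral\<^sup>L lborel (\<lambda>s. csqrt (\<i> / of_real pi) * (indicator {0<..} s *\<^sub>R
        ((exp (\<i> * of_real ((c t - c (t - s))^2 / (4 * s))) - 1) * exp (\<i> * \<sigma> * of_real s) * f (t - s) / of_real (sqrt s))))"
      by (rule integral_mult_right_zero[symmetric])
    also have "\<dots> = Op (Gk \<sigma>) f t"
      unfolding Op_def by (intro Bochner_Integration.integral_cong refl) (auto simp: Gk_def g0_def indicator_def)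
    finally show ?thesis .
  qed
  have KLfun: "KL c \<sigma> = Op (Gk \<sigma>)" for \<sigma> by (intro ext) (simp add: KLeq)
  have Gc: "continuous_on UNIV (\<lambda>z. Gk \<sigma> (fst z) (snd z))" for \<sigma>
    unfolding Gk_def by (intro continuous_intros g0c)
  have Dc: "continuous_on UNIV (\<lambda>z. Dk \<sigma> (fst z) (snd z))" for \<sigma>
    unfolding Dk_def by (intro continuous_intros g0c)
  have G0: "Gk \<sigma> t s = 0" if "s \<le> 0" for \<sigma> t s using that by (simp add: Gk_def g0_def)
  have D0: "Dk \<sigma> t s = 0" if "s \<le> 0" for \<sigma> t s using that by (simp add: Dk_def g0_def)
  have g0per: "g0 c (t + T) s = g0 c t s" for t s
  proof -
    have "c (t + T - s) = c (t - s)" using per[rule_format, of "t - s"] by (simp add: algebra_simps)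
    then show ?thesis using per by (simp add: g0_def)
  qed
  have Gper: "Gk \<sigma> (t + T) s = Gk \<sigma> t s" for \<sigma> t s by (simp add: Gk_def g0per)
  have Dper: "Dk \<sigma> (t + T) s = Dk \<sigma> t s" for \<sigma> t s by (simp add: Dk_def g0per)
  have g0b: "cmod (csqrt (\<i> / of_real pi) * g0 c t s) \<le> Cg * wt (3/2) s" for t s
  proof -
    have "cmod (csqrt (\<i> / of_real pi) * g0 c t s) = cs * cmod (g0 c t s)" unfolding cs_def by (simp add: norm_mult)
    also have "\<dots> \<le> cs * (3 * (L^2 + M^2) * wt (3/2) s)" unfolding cs_def by (intro mult_left_mono gb(1)) auto
    finally show ?thesis unfolding Cg_def by (simp add: mult_ac)
  qed
  have Gb: "cmod (Gk \<sigma> t s) \<le> Cg * wt (3/2) s" if "Im \<sigma> \<ge> 0" for \<sigma> t s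
  proof (cases "s > 0")
    case True
    have "cmod (Gk \<sigma> t s) = cmod (csqrt (\<i> / of_real pi) * g0 c t s) * cmod (exp (\<i> * \<sigma> * of_real s))"
      unfolding Gk_def by (simp add: norm_mult)
    also have "\<dots> \<le> Cg * wt (3/2) s * 1"
      using g0b norm_exp_i_sigma_le1[OF that, of s] True Cg0 wt_nonneg[of "3/2" s] by (intro mult_mono) auto
    finally show ?thesis by simp
  next
    case False
    then show ?thesis using G0[of s] Cg0 wt_nonneg[of "3/2" s] by simp
  qed
  have P1: "\<forall>\<sigma>. Im \<sigma> \<ge> 0 \<longrightarrow> compact_op_L2 T (KL c \<sigma>)"
  proof (intro allI impI)
    fix \<sigma> :: complex assume s: "Im \<sigma> \<ge> 0"
    show "compact_op_L2 T (KL c \<sigma>)" unfolding KLfun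
      apply (rule Op_compact)
      using T apply assumption
      using p32 apply assumption
      using Cg0 apply assumption
      using Gc apply assumption
      using G0 apply assumption
      using Gb[OF s] apply assumption
      using Gper apply assumption
      done
  qed
  have P2: "op_holomorphic_on T (KL c) {\<sigma>. Im \<sigma> > 0}"
    unfolding op_holomorphic_on_def
  proof (intro ballI)
    fix \<sigma> :: complex assume "\<sigma> \<in> {\<sigma>. Im \<sigma> > 0}"
    then have y: "Im \<sigma> > 0" by simp
    define y where "y = Im \<sigma>"
    have y0: "y > 0" using y unfolding y_def .
    have Db: "cmod (Dk \<sigma> t s) \<le> (Cg / y) * wt (3/2) s" for t s
    proof (cases "s > 0")
      case True
      have "cmod (Dk \<sigma> t s) = cmod (csqrt (\<i> / of_real pi) * g0 c t s) * (s * exp (- y * s))"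
        unfolding Dk_def y_def using True by (simp add: norm_mult norm_exp_i_sigma)
      also have "\<dots> \<le> (Cg * wt (3/2) s) * (1 / y)"
        using g0b s_exp_bound[OF y0, of s] True Cg0 wt_nonneg[of "3/2" s] by (intro mult_mono) auto
      finally show ?thesis by simp
    next
      case False
      then show ?thesis using D0[of s] Cg0 y0 wt_nonneg[of "3/2" s] by simp
    qed
    have Cy: "0 \<le> Cg / y" using Cg0 y0 by simp
    have DL2: "\<forall>f\<in>L2S1 T. Op (Dk \<sigma>) f \<in> L2S1 T"
    proof
      fix f assume f: "f \<in> L2S1 T"
      show "Op (Dk \<sigma>) f \<in> L2S1 T"
        apply (rule Op_L2)
        using T apply assumption
        using p32 apply assumption
        using Cy apply assumption
        using Dc apply assumption
        using D0 apply assumption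
        using Db apply assumption
        using Dper apply assumption
        using f apply assumption
        done
    qed
    have Dbound: "\<exists>C. \<forall>f\<in>L2S1 T. L2norm T (Op (Dk \<sigma>) f) \<le> C * L2norm T f"
    proof (intro exI ballI)
      fix f assume f: "f \<in> L2S1 T"
      have "L2norm T (Op (Dk \<sigma>) f) \<le> sqrt T * (Cg / y * Mc (3/2) T * L2norm T f)"
      proof (rule K4)
        fix t :: real
        show "cmod (Op (Dk \<sigma>) f t) \<le> Cg / y * Mc (3/2) T * L2norm T f"
          by (rule K1b(2)[OF f T p32 Cy hmeas_t[OF Dc] Db])
      qed (use T mult_nonneg_nonneg[OF mult_nonneg_nonneg[OF Cy Mc_nonneg[OF T p32]] L2norm_nonneg[of T f]] in auto)
      then show "L2norm T (Op (Dk \<sigma>) f) \<le> (sqrt T * (Cg / y * Mc (3/2) T)) * L2norm T f"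
        by (simp add: mult_ac)
    qed
    have Dlim: "\<forall>e>0. \<exists>d>0. \<forall>h. h \<noteq> 0 \<and> cmod h < d \<longrightarrow>
           (\<forall>f\<in>L2S1 T. L2norm T (\<lambda>t. (KL c (\<sigma> + h) f t - KL c \<sigma> f t) / h - Op (Dk \<sigma>) f t) \<le> e * L2norm T f)"
    proof (intro allI impI)
      fix e :: real assume e: "e > 0"
      define A where "A = sqrt T * (Cg * (8 / y^2)) * Mc (3/2) T"
      have A0: "0 \<le> A" unfolding A_def using T Cg0 Mc_nonneg[OF T p32] by simp
      define d where "d = min (y / 2) (e / (A + 1))"
      have d0: "d > 0" unfolding d_def using y0 e A0 by simp
      show "\<exists>d>0. \<forall>h. h \<noteq> 0 \<and> cmod h < d \<longrightarrow>
           (\<forall>f\<in>L2S1 T. L2norm T (\<lambda>t. (KL c (\<sigma> + h) f t - KL c \<sigma> f t) / h - Op (Dk \<sigma>) f t) \<le> e * L2norm T f)"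
      proof (intro exI[of _ d] conjI d0 allI impI ballI)
        fix h :: complex and f assume hh: "h \<noteq> 0 \<and> cmod h < d" and f: "f \<in> L2S1 T"
        have h0: "h \<noteq> 0" and hd: "cmod h < d" using hh by auto
        have hy: "cmod h \<le> y / 2" using hd unfolding d_def by simp
        have he: "cmod h * A \<le> e"
        proof -
          have "cmod h * A \<le> e / (A + 1) * A" using hd A0 unfolding d_def by (intro mult_right_mono) auto
          also have "\<dots> = e * (A / (A + 1))" by simp
          also have "\<dots> \<le> e" using e A0 by (intro mult_left_le) auto
          finally show ?thesis .
        qed
        have Imh: "Im (\<sigma> + h) \<ge> 0"
        proof -
          have "\<bar>Im h\<bar> \<le> cmod h" by (rule abs_Im_le_cmod)
          then show ?thesis using hy y0 unfolding y_def by simp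
        qed
        define \<Delta> where "\<Delta> t s = (Gk (\<sigma> + h) t s - Gk \<sigma> t s) / h - Dk \<sigma> t s" for t s
        have \<Delta>c: "continuous_on UNIV (\<lambda>z. \<Delta> (fst z) (snd z))"
          unfolding \<Delta>_def by (intro continuous_intros Gc Dc) (use h0 in auto)
        have Ch: "0 \<le> cmod h * (8 / y^2) * Cg" using Cg0 by simp
        have \<Delta>b: "cmod (\<Delta> t s) \<le> cmod h * (8 / y^2) * Cg * wt (3/2) s" for t s
        proof (cases "s > 0")
          case True
          have "\<Delta> t s = (csqrt (\<i> / of_real pi) * g0 c t s) *
              ((exp (\<i> * (\<sigma> + h) * of_real s) - exp (\<i> * \<sigma> * of_real s)) / h - \<i> * of_real s * exp (\<i> * \<sigma> * of_real s))"
            unfolding \<Delta>_def Gk_def Dk_def using h0 by (simp add: field_simps)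
          then have "cmod (\<Delta> t s) = cmod (csqrt (\<i> / of_real pi) * g0 c t s) *
              cmod ((exp (\<i> * (\<sigma> + h) * of_real s) - exp (\<i> * \<sigma> * of_real s)) / h - \<i> * of_real s * exp (\<i> * \<sigma> * of_real s))"
            by (simp add: norm_mult)
          also have "\<dots> \<le> (Cg * wt (3/2) s) * (cmod h * (8 / (Im \<sigma>)^2))"
            using g0b hol_bound[OF y hy[unfolded y_def] h0 True] Cg0 wt_nonneg[of "3/2" s] by (intro mult_mono) auto
          finally show ?thesis unfolding y_def by (simp add: mult_ac)
        next
          case False
          then show ?thesis unfolding \<Delta>_def using G0[of s] D0[of s] mult_nonneg_nonneg[OF Ch wt_nonneg[of "3/2" s]] by simp
        qed
        have pt: "(KL c (\<sigma> + h) f t - KL c \<sigma> f t) / h - Op (Dk \<sigma>) f t = Op \<Delta> f t" for t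
        proof -
          have i1: "integrable lborel (\<lambda>s. Gk (\<sigma> + h) t s * f (t - s))"
            by (rule K1b(1)[OF f T p32 Cg0 hmeas_t[OF Gc] Gb[OF Imh]])
          have i2: "integrable lborel (\<lambda>s. Gk \<sigma> t s * f (t - s))"
            using y by (intro K1b(1)[OF f T p32 Cg0 hmeas_t[OF Gc] Gb]) auto
          have i3: "integrable lborel (\<lambda>s. Dk \<sigma> t s * f (t - s))"
            by (rule K1b(1)[OF f T p32 Cy hmeas_t[OF Dc] Db])
          have "(KL c (\<sigma> + h) f t - KL c \<sigma> f t) / h - Op (Dk \<sigma>) f t
              = (integral\<^sup>L lborel (\<lambda>s. Gk (\<sigma> + h) t s * f (t - s) - Gk \<sigma> t s * f (t - s))) / h
                - integral\<^sup>L lborel (\<lambda>s. Dk \<sigma> t s * f (t - s))"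
            unfolding KLeq Op_def by (simp add: Bochner_Integration.integral_diff[OF i1 i2])
          also have "\<dots> = integral\<^sup>L lborel (\<lambda>s. (Gk (\<sigma> + h) t s * f (t - s) - Gk \<sigma> t s * f (t - s)) / h)
                - integral\<^sup>L lborel (\<lambda>s. Dk \<sigma> t s * f (t - s))"
            by (simp add: integral_divide_zero)
          also have "\<dots> = integral\<^sup>L lborel (\<lambda>s. (Gk (\<sigma> + h) t s * f (t - s) - Gk \<sigma> t s * f (t - s)) / h
                - Dk \<sigma> t s * f (t - s))"
          proof (rule Bochner_Integration.integral_diff[symmetric])
            show "integrable lborel (\<lambda>s. (Gk (\<sigma> + h) t s * f (t - s) - Gk \<sigma> t s * f (t - s)) / h)"
              using Bochner_Integration.integrable_diff[OF i1 i2] by (rule integrable_divide_zero)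
          qed (rule i3)
          also have "\<dots> = Op \<Delta> f t"
            unfolding Op_def \<Delta>_def using h0 by (intro Bochner_Integration.integral_cong refl) (simp add: field_simps)
          finally show ?thesis .
        qed
        have "L2norm T (\<lambda>t. (KL c (\<sigma> + h) f t - KL c \<sigma> f t) / h - Op (Dk \<sigma>) f t)
            \<le> sqrt T * (cmod h * (8 / y^2) * Cg * Mc (3/2) T * L2norm T f)"
        proof (rule K4)
          fix t :: real
          show "cmod ((KL c (\<sigma> + h) f t - KL c \<sigma> f t) / h - Op (Dk \<sigma>) f t) \<le> cmod h * (8 / y^2) * Cg * Mc (3/2) T * L2norm T f"
            unfolding pt by (rule K1b(2)[OF f T p32 Ch hmeas_t[OF \<Delta>c] \<Delta>b])
        qed (use T mult_nonneg_nonneg[OF mult_nonneg_nonneg[OF Ch Mc_nonneg[OF T p32]] L2norm_nonneg[of T f]] in auto)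
        also have "\<dots> = (cmod h * A) * L2norm T f" unfolding A_def by (simp add: mult_ac)
        also have "\<dots> \<le> e * L2norm T f" using he L2norm_nonneg[of T f] by (intro mult_right_mono) auto
        finally show "L2norm T (\<lambda>t. (KL c (\<sigma> + h) f t - KL c \<sigma> f t) / h - Op (Dk \<sigma>) f t) \<le> e * L2norm T f" .
      qed
    qed
    show "\<exists>D. (\<forall>f\<in>L2S1 T. D f \<in> L2S1 T) \<and>
        (\<exists>C. \<forall>f\<in>L2S1 T. L2norm T (D f) \<le> C * L2norm T f) \<and>
        (\<forall>e>0. \<exists>d>0. \<forall>h. h \<noteq> 0 \<and> cmod h < d \<longrightarrow>
           (\<forall>f\<in>L2S1 T. L2norm T (\<lambda>t. (KL c (\<sigma> + h) f t - KL c \<sigma> f t) / h - D f t) \<le> e * L2norm T f))"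
      using DL2 Dbound Dlim by blast
  qed
  have P3: "op_continuous_on T (KL c) {\<sigma>. Im \<sigma> \<ge> 0}"
    unfolding op_continuous_on_def
  proof (intro ballI allI impI)
    fix \<sigma>0 :: complex and e :: real assume s0: "\<sigma>0 \<in> {\<sigma>. Im \<sigma> \<ge> 0}" and e: "e > 0"
    have s0': "Im \<sigma>0 \<ge> 0" using s0 by simp
    define A where "A = sqrt T * (4 * Cg) * Mc (5/4) T"
    have A0: "0 \<le> A" unfolding A_def using T Cg0 Mc_nonneg[OF T p54] by simp
    define r where "r = e / (A + 1)"
    have r0: "r > 0" unfolding r_def using e A0 by simp
    define d where "d = r ^ 4"
    have d0: "d > 0" unfolding d_def using r0 by simp
    have dr: "d powr (1/4) = r"
    proof -
      have "r powr (real 4) = r ^ 4" by (rule powr_realpow[OF r0])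
      then have "d = r powr 4" unfolding d_def by simp
      then have "d powr (1/4) = (r powr 4) powr (1/4)" by simp
      also have "\<dots> = r powr (4 * (1/4))" by (rule powr_powr)
      also have "\<dots> = r" using r0 by simp
      finally show ?thesis .
    qed
    show "\<exists>d>0. \<forall>\<sigma>\<in>{\<sigma>. Im \<sigma> \<ge> 0}. cmod (\<sigma> - \<sigma>0) < d \<longrightarrow>
        (\<forall>f\<in>L2S1 T. L2norm T (\<lambda>t. KL c \<sigma> f t - KL c \<sigma>0 f t) \<le> e * L2norm T f)"
    proof (intro exI[of _ d] conjI d0 ballI impI)
      fix \<sigma> f assume s: "\<sigma> \<in> {\<sigma>. Im \<sigma> \<ge> 0}" and sd: "cmod (\<sigma> - \<sigma>0) < d" and f: "f \<in> L2S1 T"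
      have s': "Im \<sigma> \<ge> 0" using s by simp
      define \<delta> where "\<delta> = cmod (\<sigma> - \<sigma>0)"
      have \<delta>0: "0 \<le> \<delta>" unfolding \<delta>_def by simp
      have \<delta>r: "\<delta> powr (1/4) \<le> r"
      proof -
        have "\<delta> powr (1/4) \<le> d powr (1/4)" using sd \<delta>0 unfolding \<delta>_def by (intro powr_mono2) auto
        then show ?thesis using dr by simp
      qed
      define \<Delta> where "\<Delta> t s = Gk \<sigma> t s - Gk \<sigma>0 t s" for t s
      have \<Delta>c: "continuous_on UNIV (\<lambda>z. \<Delta> (fst z) (snd z))"
        unfolding \<Delta>_def by (intro continuous_intros Gc)
      have Cd: "0 \<le> 4 * Cg * \<delta> powr (1/4)" using Cg0 by simp
      have \<Delta>b: "cmod (\<Delta> t s) \<le> 4 * Cg * \<delta> powr (1/4) * wt (5/4) s" for t s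
      proof (cases "s > 0")
        case True
        have "\<Delta> t s = (csqrt (\<i> / of_real pi) * g0 c t s) * (exp (\<i> * \<sigma> * of_real s) - exp (\<i> * \<sigma>0 * of_real s))"
          unfolding \<Delta>_def Gk_def by (simp add: algebra_simps)
        then have "cmod (\<Delta> t s) = cmod (csqrt (\<i> / of_real pi) * g0 c t s) * cmod (exp (\<i> * \<sigma> * of_real s) - exp (\<i> * \<sigma>0 * of_real s))"
          by (simp add: norm_mult)
        also have "\<dots> \<le> (Cg * wt (3/2) s) * (4 * (\<delta> * s) powr (1/4))"
          using g0b cont_bound[OF s' s0' True] Cg0 wt_nonneg[of "3/2" s] unfolding \<delta>_def by (intro mult_mono) auto
        also have "\<dots> = 4 * Cg * \<delta> powr (1/4) * (wt (3/2) s * s powr (1/4))"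
          using \<delta>0 True by (simp add: powr_mult mult_ac)
        also have "\<dots> \<le> 4 * Cg * \<delta> powr (1/4) * wt (5/4) s"
          using wt_54[OF True] Cd by (intro mult_left_mono) auto
        finally show ?thesis .
      next
        case False
        then show ?thesis unfolding \<Delta>_def using G0[of s] mult_nonneg_nonneg[OF Cd wt_nonneg[of "5/4" s]] by simp
      qed
      have pt: "KL c \<sigma> f t - KL c \<sigma>0 f t = Op \<Delta> f t" for t
      proof -
        have i1: "integrable lborel (\<lambda>s. Gk \<sigma> t s * f (t - s))"
          by (rule K1b(1)[OF f T p32 Cg0 hmeas_t[OF Gc] Gb[OF s']])
        have i2: "integrable lborel (\<lambda>s. Gk \<sigma>0 t s * f (t - s))"
          by (rule K1b(1)[OF f T p32 Cg0 hmeas_t[OF Gc] Gb[OF s0']])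
        show ?thesis unfolding KLeq Op_def \<Delta>_def
          by (simp add: Bochner_Integration.integral_diff[OF i1 i2, symmetric] algebra_simps)
      qed
      have "L2norm T (\<lambda>t. KL c \<sigma> f t - KL c \<sigma>0 f t) \<le> sqrt T * (4 * Cg * \<delta> powr (1/4) * Mc (5/4) T * L2norm T f)"
      proof (rule K4)
        fix t :: real
        show "cmod (KL c \<sigma> f t - KL c \<sigma>0 f t) \<le> 4 * Cg * \<delta> powr (1/4) * Mc (5/4) T * L2norm T f"
          unfolding pt by (rule K1b(2)[OF f T p54 Cd hmeas_t[OF \<Delta>c] \<Delta>b])
      qed (use T mult_nonneg_nonneg[OF mult_nonneg_nonneg[OF Cd Mc_nonneg[OF T p54]] L2norm_nonneg[of T f]] in auto)
      also have "\<dots> = (A * \<delta> powr (1/4)) * L2norm T f" unfolding A_def by (simp add: mult_ac)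
      also have "\<dots> \<le> e * L2norm T f"
      proof (intro mult_right_mono L2norm_nonneg)
        have "A * \<delta> powr (1/4) \<le> A * r" using \<delta>r A0 by (intro mult_left_mono) auto
        also have "\<dots> = e * (A / (A + 1))" unfolding r_def by simp
        also have "\<dots> \<le> e" using e A0 by (intro mult_left_le) auto
        finally show "A * \<delta> powr (1/4) \<le> e" .
      qed
      finally show "L2norm T (\<lambda>t. KL c \<sigma> f t - KL c \<sigma>0 f t) \<le> e * L2norm T f" .
    qed
  qed
  show ?thesis using P1 P2 P3 by blast
qed


theorem proposition6:
  fixes \<omega> :: real and c :: "real \<Rightarrow> real" and E :: "nat \<Rightarrow> complex"
  assumes "\<omega> > 0"
    and "\<forall>k x. ((deriv ^^ k) c) differentiable (at x)"
    and "\<forall>t. c (t + 2 * pi / \<omega>) = c t"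
    and "\<forall>t. (\<lambda>n. 2 * (E (Suc n) / (\<i> * of_nat (Suc n) * of_real \<omega>)^2
                          * exp (\<i> * of_nat (Suc n) * of_real \<omega> * of_real t)
                      + cnj (E (Suc n)) / (- \<i> * of_nat (Suc n) * of_real \<omega>)^2
                          * exp (- \<i> * of_nat (Suc n) * of_real \<omega> * of_real t)))
              sums (of_real (c t))"
  shows "(\<forall>\<sigma>. Im \<sigma> \<ge> 0 \<longrightarrow> compact_op_L2 (2 * pi / \<omega>) (KL c \<sigma>))
       \<and> op_holomorphic_on (2 * pi / \<omega>) (KL c) {\<sigma>. Im \<sigma> > 0}
       \<and> op_continuous_on (2 * pi / \<omega>) (KL c) {\<sigma>. Im \<sigma> \<ge> 0}"
proof -
  have T: "2 * pi / \<omega> > 0" using assms(1) by simp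
  show ?thesis by (rule main_T[OF T assms(2) assms(3)])
qed

end
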